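(* Let $S$ be a completely $0$-simple semigroup with finitely many left ideals and finitely many right ideals. If every maximal subgroup of $S$ is defined by a finite complete rewriting system, then $S$ is also defined by a finite complete rewriting system.
   Context: A semigroup $S$ with zero is completely $0$-simple if it is $0$-simple (i.e. $S^2\neq\{0\}$ and its only ideals are $\{0\}$ and $S$) and has $0$-minimal left and right ideals. A rewriting system $\langle X\mid R\rangle$ consists of an alphabet $X$ and rules $u\to v$ with $u,v\in X^+$; it is finite if $X,R$ are finite. One-step reduction: $w_1uw_2\to_R w_1vw_2$ for $(u\to v)\in R$; $\to_R^*$ is its reflexive transitive closure. It is noetherian if there is no infinite chain $w_1\to_R w_2\to_R\cdots$, confluent if $u\to_R^*v$, $u\to_R^*v'$ imply a common $w$ with $v\to_R^*w$, $v'\to_R^*w$, and complete if both. A semigroup (or group) is defined by $\langle X\mid R\rangle$ if it is isomorphic to $X^+$ modulo the congruence generated by $R$. *)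

theory Defs
  imports Main
begin

definition semigroup_on :: "'a set \<Rightarrow> ('a \<Rightarrow> 'a \<Rightarrow> 'a) \<Rightarrow> bool" where
  "semigroup_on S f \<longleftrightarrow> (\<forall>x\<in>S. \<forall>y\<in>S. f x y \<in> S) \<and>
     (\<forall>x\<in>S. \<forall>y\<in>S. \<forall>z\<in>S. f (f x y) z = f x (f y z))"

definition is_zero :: "'a set \<Rightarrow> ('a \<Rightarrow> 'a \<Rightarrow> 'a) \<Rightarrow> 'a \<Rightarrow> bool" where
  "is_zero S f z \<longleftrightarrow> z \<in> S \<and> (\<forall>x\<in>S. f z x = z \<and> f x z = z)"

definition setmult :: "('a \<Rightarrow> 'a \<Rightarrow> 'a) \<Rightarrow> 'a set \<Rightarrow> 'a set \<Rightarrow> 'a set" where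
  "setmult f A B = {f a b | a b. a \<in> A \<and> b \<in> B}"

definition left_ideal :: "'a set \<Rightarrow> ('a \<Rightarrow> 'a \<Rightarrow> 'a) \<Rightarrow> 'a set \<Rightarrow> bool" where
  "left_ideal S f I \<longleftrightarrow> I \<noteq> {} \<and> I \<subseteq> S \<and> setmult f S I \<subseteq> I"

definition right_ideal :: "'a set \<Rightarrow> ('a \<Rightarrow> 'a \<Rightarrow> 'a) \<Rightarrow> 'a set \<Rightarrow> bool" where
  "right_ideal S f I \<longleftrightarrow> I \<noteq> {} \<and> I \<subseteq> S \<and> setmult f I S \<subseteq> I"

definition two_sided_ideal :: "'a set \<Rightarrow> ('a \<Rightarrow> 'a \<Rightarrow> 'a) \<Rightarrow> 'a set \<Rightarrow> bool" where
  "two_sided_ideal S f I \<longleftrightarrow> left_ideal S f I \<and> right_ideal S f I"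

definition zero_simple :: "'a set \<Rightarrow> ('a \<Rightarrow> 'a \<Rightarrow> 'a) \<Rightarrow> 'a \<Rightarrow> bool" where
  "zero_simple S f z \<longleftrightarrow> setmult f S S \<noteq> {z} \<and>
     (\<forall>I. two_sided_ideal S f I \<longrightarrow> I = {z} \<or> I = S)"

definition zero_minimal_left_ideal :: "'a set \<Rightarrow> ('a \<Rightarrow> 'a \<Rightarrow> 'a) \<Rightarrow> 'a \<Rightarrow> 'a set \<Rightarrow> bool" where
  "zero_minimal_left_ideal S f z L \<longleftrightarrow> left_ideal S f L \<and> L \<noteq> {z} \<and>
     (\<forall>L'. left_ideal S f L' \<and> L' \<subseteq> L \<longrightarrow> L' = {z} \<or> L' = L)"

definition zero_minimal_right_ideal :: "'a set \<Rightarrow> ('a \<Rightarrow> 'a \<Rightarrow> 'a) \<Rightarrow> 'a \<Rightarrow> 'a set \<Rightarrow> bool" where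
  "zero_minimal_right_ideal S f z L \<longleftrightarrow> right_ideal S f L \<and> L \<noteq> {z} \<and>
     (\<forall>L'. right_ideal S f L' \<and> L' \<subseteq> L \<longrightarrow> L' = {z} \<or> L' = L)"

definition completely_zero_simple :: "'a set \<Rightarrow> ('a \<Rightarrow> 'a \<Rightarrow> 'a) \<Rightarrow> bool" where
  "completely_zero_simple S f \<longleftrightarrow> semigroup_on S f \<and>
     (\<exists>z. is_zero S f z \<and> zero_simple S f z \<and>
          (\<exists>L. zero_minimal_left_ideal S f z L) \<and> (\<exists>R. zero_minimal_right_ideal S f z R))"

definition is_subgroup_of :: "'a set \<Rightarrow> ('a \<Rightarrow> 'a \<Rightarrow> 'a) \<Rightarrow> 'a set \<Rightarrow> bool" where
  "is_subgroup_of S f H \<longleftrightarrow> H \<subseteq> S \<and> (\<forall>x\<in>H. \<forall>y\<in>H. f x y \<in> H) \<and>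
     (\<exists>e\<in>H. \<forall>x\<in>H. f e x = x \<and> f x e = x \<and> (\<exists>y\<in>H. f x y = e \<and> f y x = e))"

definition maximal_subgroup :: "'a set \<Rightarrow> ('a \<Rightarrow> 'a \<Rightarrow> 'a) \<Rightarrow> 'a set \<Rightarrow> bool" where
  "maximal_subgroup S f H \<longleftrightarrow> is_subgroup_of S f H \<and>
     (\<forall>K. is_subgroup_of S f K \<and> H \<subseteq> K \<longrightarrow> K = H)"

definition words :: "'b set \<Rightarrow> 'b list set" where
  "words X = {w. w \<noteq> [] \<and> set w \<subseteq> X}"

definition rewriting_system :: "'b set \<Rightarrow> ('b list \<times> 'b list) set \<Rightarrow> bool" where
  "rewriting_system X R \<longleftrightarrow> (\<forall>(u, v)\<in>R. u \<in> words X \<and> v \<in> words X)"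

definition rstep :: "('b list \<times> 'b list) set \<Rightarrow> ('b list \<times> 'b list) set" where
  "rstep R = {(w1 @ u @ w2, w1 @ v @ w2) | w1 u v w2. (u, v) \<in> R}"

definition noetherian :: "'b set \<Rightarrow> ('b list \<times> 'b list) set \<Rightarrow> bool" where
  "noetherian X R \<longleftrightarrow>
     \<not> (\<exists>c :: nat \<Rightarrow> 'b list. (\<forall>i. c i \<in> words X) \<and> (\<forall>i. (c i, c (Suc i)) \<in> rstep R))"

definition confluent :: "'b set \<Rightarrow> ('b list \<times> 'b list) set \<Rightarrow> bool" where
  "confluent X R \<longleftrightarrow> (\<forall>u\<in>words X. \<forall>v v'. (u, v) \<in> (rstep R)\<^sup>* \<and> (u, v') \<in> (rstep R)\<^sup>* \<longrightarrow>
     (\<exists>w. (v, w) \<in> (rstep R)\<^sup>* \<and> (v', w) \<in> (rstep R)\<^sup>*))"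

definition complete_rs :: "'b set \<Rightarrow> ('b list \<times> 'b list) set \<Rightarrow> bool" where
  "complete_rs X R \<longleftrightarrow> noetherian X R \<and> confluent X R"

definition rcong :: "('b list \<times> 'b list) set \<Rightarrow> ('b list \<times> 'b list) set" where
  "rcong R = (rstep R \<union> (rstep R)\<inverse>)\<^sup>*"

text \<open>(S, f) is isomorphic to \<open>X\<^sup>+\<close> modulo the congruence generated by R, expressed via a
  surjective homomorphism \<open>X\<^sup>+ \<rightarrow> S\<close> whose kernel is exactly that congruence.\<close>
definition defined_by :: "'a set \<Rightarrow> ('a \<Rightarrow> 'a \<Rightarrow> 'a) \<Rightarrow> 'b set \<Rightarrow> ('b list \<times> 'b list) set \<Rightarrow> bool" where
  "defined_by S f X R \<longleftrightarrow> (\<exists>\<phi>. \<phi> ` words X = S \<and>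
     (\<forall>u\<in>words X. \<forall>v\<in>words X. \<phi> (u @ v) = f (\<phi> u) (\<phi> v)) \<and>
     (\<forall>u\<in>words X. \<forall>v\<in>words X. \<phi> u = \<phi> v \<longleftrightarrow> (u, v) \<in> rcong R))"

text \<open>Finite alphabets are taken, without loss of generality, as finite sets of naturals.\<close>
definition fcrs_defined :: "'a set \<Rightarrow> ('a \<Rightarrow> 'a \<Rightarrow> 'a) \<Rightarrow> bool" where
  "fcrs_defined S f \<longleftrightarrow> (\<exists>(X :: nat set) R. finite X \<and> finite R \<and> rewriting_system X R \<and>
     complete_rs X R \<and> defined_by S f X R)"

end

theory Submission
  imports Defs
begin


locale czs =
  fixes S :: "'a set" and f :: "'a \<Rightarrow> 'a \<Rightarrow> 'a" (infixl "\<cdot>" 70) and z :: 'a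
  assumes sg: "semigroup_on S f" and zer: "is_zero S f z" and zs: "zero_simple S f z"
    and Lmin: "\<exists>L. zero_minimal_left_ideal S f z L"
begin

lemma cl[intro,simp]: "x \<in> S \<Longrightarrow> y \<in> S \<Longrightarrow> x \<cdot> y \<in> S"
  using sg unfolding semigroup_on_def by blast

lemma assoc: "x \<in> S \<Longrightarrow> y \<in> S \<Longrightarrow> w \<in> S \<Longrightarrow> x \<cdot> y \<cdot> w = x \<cdot> (y \<cdot> w)"
  using sg unfolding semigroup_on_def by blast

lemma zS[simp]: "z \<in> S" using zer unfolding is_zero_def by blast
lemma zl[simp]: "x \<in> S \<Longrightarrow> z \<cdot> x = z" using zer unfolding is_zero_def by blast
lemma zr[simp]: "x \<in> S \<Longrightarrow> x \<cdot> z = z" using zer unfolding is_zero_def by blast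

lemma SS: "setmult f S S = S"
proof -
  have "two_sided_ideal S f (setmult f S S)"
    unfolding two_sided_ideal_def left_ideal_def right_ideal_def
  proof (intro conjI)
    show "setmult f S S \<noteq> {}" unfolding setmult_def using zS by blast
    thus "setmult f S S \<noteq> {}" .
    show "setmult f S S \<subseteq> S" unfolding setmult_def by auto
    thus "setmult f S S \<subseteq> S" .
    show "setmult f S (setmult f S S) \<subseteq> setmult f S S"
    proof
      fix x assume "x \<in> setmult f S (setmult f S S)"
      then obtain s a b where "x = s \<cdot> (a \<cdot> b)" "s \<in> S" "a \<in> S" "b \<in> S"
        unfolding setmult_def by blast
      hence "x = (s \<cdot> a) \<cdot> b" "s \<cdot> a \<in> S" "b \<in> S" by (auto simp: assoc)
      thus "x \<in> setmult f S S" unfolding setmult_def by blast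
    qed
    show "setmult f (setmult f S S) S \<subseteq> setmult f S S"
    proof
      fix x assume "x \<in> setmult f (setmult f S S) S"
      then obtain s a b where "x = (a \<cdot> b) \<cdot> s" "s \<in> S" "a \<in> S" "b \<in> S"
        unfolding setmult_def by blast
      hence "x = a \<cdot> (b \<cdot> s)" "b \<cdot> s \<in> S" "a \<in> S" by (auto simp: assoc)
      thus "x \<in> setmult f S S" unfolding setmult_def by blast
    qed
  qed
  moreover have "setmult f S S \<noteq> {z}" using zs unfolding zero_simple_def by blast
  ultimately show ?thesis using zs unfolding zero_simple_def by blast
qed

lemma SS_ex: "x \<in> S \<Longrightarrow> \<exists>a\<in>S. \<exists>b\<in>S. x = a \<cdot> b"
  using SS unfolding setmult_def by blast

lemma Snz: "\<exists>x\<in>S. x \<noteq> z"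
proof (rule ccontr)
  assume "\<not> ?thesis"
  hence "\<forall>x\<in>S. x = z" by blast
  moreover have "z = z \<cdot> z" by simp
  ultimately have "setmult f S S = {z}" unfolding setmult_def using zS by blast
  thus False using zs unfolding zero_simple_def by blast
qed

lemma ideal_cases: assumes "I \<subseteq> S" "z \<in> I" "\<forall>x\<in>I. \<forall>s\<in>S. s \<cdot> x \<in> I \<and> x \<cdot> s \<in> I"
  shows "I = {z} \<or> I = S"
proof -
  have "setmult f S I \<subseteq> I" unfolding setmult_def using assms(3) by blast
  moreover have "setmult f I S \<subseteq> I" unfolding setmult_def using assms(3) by blast
  ultimately have "two_sided_ideal S f I" unfolding two_sided_ideal_def left_ideal_def right_ideal_def
    using assms(1,2) by blast
  thus ?thesis using zs unfolding zero_simple_def by blast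
qed

definition lp :: "'a \<Rightarrow> 'a set" where "lp a = {s \<cdot> a | s. s \<in> S}"

lemma lp_z: assumes "a \<in> S" shows "z \<in> lp a"
proof -
  have "z = z \<cdot> a" using assms by simp
  thus ?thesis unfolding lp_def using zS by blast
qed

lemma li_z: assumes "left_ideal S f L" shows "z \<in> L"
proof -
  obtain x where x: "x \<in> L" using assms unfolding left_ideal_def by blast
  hence "x \<in> S" using assms unfolding left_ideal_def by blast
  hence "z = z \<cdot> x" by simp
  hence "z \<in> setmult f S L" using x zS unfolding setmult_def by blast
  thus ?thesis using assms unfolding left_ideal_def by blast
qed

lemma li_cl: "left_ideal S f L \<Longrightarrow> y \<in> L \<Longrightarrow> t \<in> S \<Longrightarrow> t \<cdot> y \<in> L"
  unfolding left_ideal_def setmult_def by blast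

lemma minL_z: "zero_minimal_left_ideal S f z L \<Longrightarrow> z \<in> L"
  unfolding zero_minimal_left_ideal_def using li_z by blast

lemma minL_li: "zero_minimal_left_ideal S f z L \<Longrightarrow> left_ideal S f L"
  unfolding zero_minimal_left_ideal_def by (elim conjE)

lemma minL_sub: "zero_minimal_left_ideal S f z L \<Longrightarrow> L \<subseteq> S"
  using minL_li[of L] unfolding left_ideal_def by blast

lemma minL_cl: "zero_minimal_left_ideal S f z L \<Longrightarrow> x \<in> L \<Longrightarrow> s \<in> S \<Longrightarrow> s \<cdot> x \<in> L"
  using minL_li li_cl by metis

lemma minL_min: assumes L: "zero_minimal_left_ideal S f z L" and h: "L' \<subseteq> L" "z \<in> L'"
   "\<forall>x\<in>L'. \<forall>s\<in>S. s \<cdot> x \<in> L'" shows "L' = {z} \<or> L' = L"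
proof -
  have "L' \<subseteq> S" using h(1) minL_sub[OF L] by (rule order_trans)
  moreover have "setmult f S L' \<subseteq> L'" unfolding setmult_def using h(3) by blast
  ultimately have "left_ideal S f L'" unfolding left_ideal_def using h(2) by blast
  moreover have "\<forall>L'. left_ideal S f L' \<and> L' \<subseteq> L \<longrightarrow> L' = {z} \<or> L' = L"
    using L unfolding zero_minimal_left_ideal_def by (elim conjE)
  ultimately show ?thesis using h(1) by blast
qed

lemma minL_LS: assumes L: "zero_minimal_left_ideal S f z L"
  shows "{l \<cdot> s | l s. l \<in> L \<and> s \<in> S} = S"
proof -
  let ?I = "{l \<cdot> s | l s. l \<in> L \<and> s \<in> S}"
  have sub: "L \<subseteq> S" using minL_sub[OF L] .
  have "?I \<subseteq> S" using sub by auto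
  moreover have "z \<in> ?I"
  proof -
    have "z = z \<cdot> z" by simp
    thus ?thesis using minL_z[OF L] zS by blast
  qed
  moreover have "\<forall>x\<in>?I. \<forall>s\<in>S. s \<cdot> x \<in> ?I \<and> x \<cdot> s \<in> ?I"
  proof (intro ballI)
    fix x s assume "x \<in> ?I" "s \<in> S"
    then obtain l t where lt: "x = l \<cdot> t" "l \<in> L" "t \<in> S" by blast
    have "s \<cdot> x = (s \<cdot> l) \<cdot> t" using lt sub \<open>s\<in>S\<close> by (simp add: assoc subsetD)
    moreover have "s \<cdot> l \<in> L" using minL_cl[OF L] lt \<open>s\<in>S\<close> by blast
    moreover have "x \<cdot> s = l \<cdot> (t \<cdot> s)" using lt sub \<open>s\<in>S\<close> by (simp add: assoc subsetD)
    ultimately show "s \<cdot> x \<in> ?I \<and> x \<cdot> s \<in> ?I" using lt \<open>s\<in>S\<close> by auto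
  qed
  ultimately have c: "?I = {z} \<or> ?I = S" by (rule ideal_cases)
  show ?thesis
  proof (rule ccontr)
    assume "?I \<noteq> S"
    hence I0: "?I = {z}" using c by blast
    have "L = {z} \<or> L = S"
    proof (rule ideal_cases[OF sub minL_z[OF L]])
      show "\<forall>x\<in>L. \<forall>s\<in>S. s \<cdot> x \<in> L \<and> x \<cdot> s \<in> L"
      proof (intro ballI conjI)
        fix x s assume x: "x \<in> L" and s: "s \<in> S"
        show "s \<cdot> x \<in> L" using minL_cl[OF L x s] .
        have "x \<cdot> s \<in> ?I" using x s by blast
        hence "x \<cdot> s = z" using I0 by blast
        thus "x \<cdot> s \<in> L" using minL_z[OF L] by simp
      qed
    qed
    moreover have "L \<noteq> {z}" using L unfolding zero_minimal_left_ideal_def by blast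
    ultimately have LS: "L = S" by blast
    have "setmult f S S = {z}"
    proof -
      have "setmult f S S = ?I" unfolding setmult_def LS ..
      thus ?thesis using I0 by simp
    qed
    thus False using zs unfolding zero_simple_def by blast
  qed
qed

lemma minL_LS_ex: assumes L: "zero_minimal_left_ideal S f z L" and y: "y \<in> S"
  shows "\<exists>l t. y = l \<cdot> t \<and> l \<in> L \<and> t \<in> S"
proof -
  have "y \<in> {l \<cdot> s | l s. l \<in> L \<and> s \<in> S}" using minL_LS[OF L] y by simp
  thus ?thesis by blast
qed

lemma minL_gen: assumes L: "zero_minimal_left_ideal S f z L" and a: "a \<in> L" "a \<noteq> z"
  shows "lp a = L"
proof -
  have sub: "L \<subseteq> S" using minL_sub[OF L] .
  have aS: "a \<in> S" using a sub by blast
  have c: "lp a = {z} \<or> lp a = L"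
  proof (rule minL_min[OF L])
    show "lp a \<subseteq> L"
    proof
      fix x assume "x \<in> lp a"
      then obtain s where "x = s \<cdot> a" "s \<in> S" unfolding lp_def by blast
      thus "x \<in> L" using minL_cl[OF L a(1)] by simp
    qed
    show "z \<in> lp a" using lp_z[OF aS] .
    show "\<forall>x\<in>lp a. \<forall>s\<in>S. s \<cdot> x \<in> lp a"
    proof (intro ballI)
      fix x s assume "x \<in> lp a" "s \<in> S"
      then obtain t where "x = t \<cdot> a" "t \<in> S" unfolding lp_def by blast
      hence "s \<cdot> x = (s \<cdot> t) \<cdot> a" "s \<cdot> t \<in> S" using aS \<open>s\<in>S\<close> by (auto simp: assoc)
      thus "s \<cdot> x \<in> lp a" unfolding lp_def by blast
    qed
  qed
  show ?thesis
  proof (rule ccontr)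
    assume "lp a \<noteq> L"
    hence la: "lp a = {z}" using c by blast
    let ?N = "{x \<in> L. \<forall>s\<in>S. s \<cdot> x = z}"
    have "?N = {z} \<or> ?N = L"
    proof (rule minL_min[OF L])
      show "?N \<subseteq> L" by blast
      show "z \<in> ?N" using minL_z[OF L] by simp
      show "\<forall>x\<in>?N. \<forall>s\<in>S. s \<cdot> x \<in> ?N"
      proof (intro ballI)
        fix x s assume x: "x \<in> ?N" and s: "s \<in> S"
        have "s \<cdot> x \<in> L" using minL_cl[OF L] x s by blast
        moreover have "\<forall>t\<in>S. t \<cdot> (s \<cdot> x) = z"
        proof
          fix t assume t: "t \<in> S"
          have "t \<cdot> (s \<cdot> x) = (t \<cdot> s) \<cdot> x" using x s t sub by (simp add: assoc subsetD)
          also have "\<dots> = z" using x s t by simp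
          finally show "t \<cdot> (s \<cdot> x) = z" .
        qed
        ultimately show "s \<cdot> x \<in> ?N" by blast
      qed
    qed
    moreover have "a \<in> ?N"
    proof -
      have "\<forall>s\<in>S. s \<cdot> a = z"
      proof
        fix s assume "s \<in> S"
        hence "s \<cdot> a \<in> lp a" unfolding lp_def by blast
        thus "s \<cdot> a = z" using la by blast
      qed
      thus ?thesis using a by blast
    qed
    ultimately have N: "?N = L" using a by blast
    have "setmult f S S = {z}"
    proof -
      have "\<forall>x\<in>S. \<forall>y\<in>S. x \<cdot> y = z"
      proof (intro ballI)
        fix x y assume "x \<in> S" "y \<in> S"
        then obtain l t where "y = l \<cdot> t" "l \<in> L" "t \<in> S" using minL_LS_ex[OF L] by blast
        hence "x \<cdot> y = (x \<cdot> l) \<cdot> t" using \<open>x\<in>S\<close> sub by (simp add: assoc subsetD)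
        also have "x \<cdot> l = z" using N \<open>l \<in> L\<close> \<open>x\<in>S\<close> by blast
        finally show "x \<cdot> y = z" using \<open>t\<in>S\<close> by simp
      qed
      moreover have "z = z \<cdot> z" by simp
      ultimately show ?thesis unfolding setmult_def using zS by blast
    qed
    thus False using zs unfolding zero_simple_def by blast
  qed
qed

lemma minL_mult: assumes L: "zero_minimal_left_ideal S f z L" and s: "s \<in> S"
  and nz: "{l \<cdot> s | l. l \<in> L} \<noteq> {z}"
  shows "zero_minimal_left_ideal S f z {l \<cdot> s | l. l \<in> L}"
proof -
  let ?M = "{l \<cdot> s | l. l \<in> L}"
  have sub: "L \<subseteq> S" using minL_sub[OF L] .
  have li: "left_ideal S f ?M"
    unfolding left_ideal_def
  proof (intro conjI)
    show "?M \<noteq> {}" using minL_z[OF L] by blast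
    show "?M \<subseteq> S" using sub s by auto
    show "setmult f S ?M \<subseteq> ?M"
    proof
      fix x assume "x \<in> setmult f S ?M"
      then obtain t l where "x = t \<cdot> (l \<cdot> s)" "t \<in> S" "l \<in> L" unfolding setmult_def by blast
      hence "x = (t \<cdot> l) \<cdot> s" "t \<cdot> l \<in> L" using sub s minL_cl[OF L] by (auto simp: assoc subsetD)
      thus "x \<in> ?M" by blast
    qed
  qed
  have "\<forall>L'. left_ideal S f L' \<and> L' \<subseteq> ?M \<longrightarrow> L' = {z} \<or> L' = ?M"
  proof (intro allI impI)
    fix L' assume a: "left_ideal S f L' \<and> L' \<subseteq> ?M"
    show "L' = {z} \<or> L' = ?M"
    proof (cases "L' = {z}")
      case False
      have z': "z \<in> L'" using a li_z by blast
      then obtain y where y: "y \<in> L'" "y \<noteq> z" using False by blast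
      then obtain l0 where l0: "y = l0 \<cdot> s" "l0 \<in> L" using a by blast
      have l0z: "l0 \<noteq> z" using l0 y s by auto
      let ?N = "{x \<in> L. x \<cdot> s \<in> L'}"
      have "?N = {z} \<or> ?N = L"
      proof (rule minL_min[OF L])
        show "?N \<subseteq> L" by blast
        show "z \<in> ?N" using minL_z[OF L] z' s by simp
        show "\<forall>x\<in>?N. \<forall>t\<in>S. t \<cdot> x \<in> ?N"
        proof (intro ballI)
          fix x t assume x: "x \<in> ?N" and t: "t \<in> S"
          have "t \<cdot> x \<in> L" using minL_cl[OF L] x t by blast
          moreover have "t \<cdot> (x \<cdot> s) \<in> L'" using li_cl a x t by blast
          moreover have "t \<cdot> x \<cdot> s = t \<cdot> (x \<cdot> s)" using x t s sub by (simp add: assoc subsetD)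
          ultimately show "t \<cdot> x \<in> ?N" by simp
        qed
      qed
      moreover have "l0 \<in> ?N" using l0 y by auto
      ultimately have "?N = L" using l0z by blast
      hence "?M \<subseteq> L'" by blast
      thus ?thesis using a by blast
    qed simp
  qed
  thus ?thesis unfolding zero_minimal_left_ideal_def using li nz by blast
qed

lemma lp_min: assumes a: "a \<in> S" "a \<noteq> z"
  shows "zero_minimal_left_ideal S f z (lp a) \<and> a \<in> lp a"
proof -
  obtain L where L: "zero_minimal_left_ideal S f z L" using Lmin by blast
  obtain l s where ls: "a = l \<cdot> s" "l \<in> L" "s \<in> S" using minL_LS_ex[OF L a(1)] by blast
  let ?M = "{l \<cdot> s | l. l \<in> L}"
  have "?M \<noteq> {z}" using ls a by blast
  hence M: "zero_minimal_left_ideal S f z ?M" by (rule minL_mult[OF L ls(3)])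
  have "a \<in> ?M" using ls by blast
  hence "lp a = ?M" using minL_gen[OF M _ a(2)] by blast
  thus ?thesis using M \<open>a \<in> ?M\<close> by simp
qed

lemma lp_sub: "a \<in> S \<Longrightarrow> lp a \<subseteq> S" unfolding lp_def by auto

lemma lp_same: assumes "a \<in> S" "a \<noteq> z" "b \<in> lp a" "b \<noteq> z" shows "lp b = lp a"
  using minL_gen[OF conjunct1[OF lp_min[OF assms(1,2)]] assms(3,4)] .

lemma lp_self: assumes "a \<in> S" "a \<noteq> z" shows "\<exists>s\<in>S. a = s \<cdot> a"
proof -
  have "a \<in> lp a" using lp_min[OF assms] by blast
  thus ?thesis unfolding lp_def by blast
qed

lemma annih: assumes L: "zero_minimal_left_ideal S f z L" and b: "b \<in> S"
  and x0: "x0 \<in> L" "x0 \<cdot> b \<noteq> z" and x: "x \<in> L" "x \<noteq> z"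
  shows "x \<cdot> b \<noteq> z"
proof
  assume xb: "x \<cdot> b = z"
  have sub: "L \<subseteq> S" using minL_sub[OF L] .
  let ?N = "{y \<in> L. y \<cdot> b = z}"
  have "?N = {z} \<or> ?N = L"
  proof (rule minL_min[OF L])
    show "?N \<subseteq> L" by blast
    show "z \<in> ?N" using minL_z[OF L] b by simp
    show "\<forall>y\<in>?N. \<forall>t\<in>S. t \<cdot> y \<in> ?N"
      using minL_cl[OF L] sub b by (auto simp: assoc subsetD)
  qed
  thus False using x xb x0 by blast
qed


end



lemma setmult_flip: "setmult (\<lambda>x y. f y x) A B = setmult f B A"
  unfolding setmult_def by blast

lemma left_flip: "left_ideal S (\<lambda>x y. f y x) I = right_ideal S f I"
  unfolding left_ideal_def right_ideal_def setmult_flip[of f S I] by (rule refl)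

lemma right_flip: "right_ideal S (\<lambda>x y. f y x) I = left_ideal S f I"
  unfolding left_ideal_def right_ideal_def setmult_flip[of f I S] by (rule refl)

lemma czs_flip:
  assumes "completely_zero_simple S f"
  shows "\<exists>z. czs S f z \<and> czs S (\<lambda>x y. f y x) z"
proof -
  obtain z where z: "semigroup_on S f" "is_zero S f z" "zero_simple S f z"
    "\<exists>L. zero_minimal_left_ideal S f z L" "\<exists>R. zero_minimal_right_ideal S f z R"
    using assms unfolding completely_zero_simple_def by blast
  have "czs S f z" using z by unfold_locales
  moreover have "czs S (\<lambda>x y. f y x) z"
  proof
    show "semigroup_on S (\<lambda>x y. f y x)" using z(1) unfolding semigroup_on_def by simp
    show "is_zero S (\<lambda>x y. f y x) z" using z(2) unfolding is_zero_def by simp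
    have tw: "two_sided_ideal S (\<lambda>x y. f y x) I = two_sided_ideal S f I" for I
      unfolding two_sided_ideal_def left_flip[of S f I] right_flip[of S f I] by blast
    show "zero_simple S (\<lambda>x y. f y x) z" using z(3)
      unfolding zero_simple_def tw setmult_flip[of f S S] by blast
    have lf: "left_ideal S (\<lambda>x y. f y x) I = right_ideal S f I" for I by (rule left_flip)
    show "\<exists>L. zero_minimal_left_ideal S (\<lambda>x y. f y x) z L" using z(5)
      unfolding zero_minimal_left_ideal_def zero_minimal_right_ideal_def lf by blast
  qed
  ultimately show ?thesis by blast
qed

locale czs2 = L: czs S f z + R: czs S "\<lambda>x y. f y x" z for S f z
begin

notation f (infixl "\<cdot>" 70)

lemma SaS: assumes a: "a \<in> S" "a \<noteq> z" shows "\<exists>u\<in>S. \<exists>v\<in>S. a = u \<cdot> a \<cdot> v"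
proof -
  let ?T = "{x\<in>S. \<forall>u\<in>S. \<forall>v\<in>S. u \<cdot> x \<cdot> v = z}"
  have "?T = {z} \<or> ?T = S"
  proof (rule L.ideal_cases)
    show "?T \<subseteq> S" by blast
    show "z \<in> ?T" by simp
    show "\<forall>x\<in>?T. \<forall>s\<in>S. s \<cdot> x \<in> ?T \<and> x \<cdot> s \<in> ?T"
      by (auto simp: L.assoc)
  qed
  moreover have "?T \<noteq> S"
  proof
    assume T: "?T = S"
    obtain y where y: "y \<in> S" "y \<noteq> z" using L.Snz by blast
    obtain p b where "y = p \<cdot> b" "p \<in> S" "b \<in> S" using L.SS_ex[OF y(1)] by blast
    moreover obtain q w where "b = q \<cdot> w" "q \<in> S" "w \<in> S" using L.SS_ex[OF \<open>b\<in>S\<close>] by blast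
    ultimately have "y = p \<cdot> q \<cdot> w" by (simp add: L.assoc)
    moreover have "q \<in> ?T" using T \<open>q\<in>S\<close> by blast
    ultimately show False using y \<open>p\<in>S\<close> \<open>w\<in>S\<close> by blast
  qed
  ultimately have T0: "?T = {z}" by blast
  obtain u v where uv: "u \<in> S" "v \<in> S" "u \<cdot> a \<cdot> v \<noteq> z" using T0 a by blast
  let ?I = "{u \<cdot> a \<cdot> v | u v. u \<in> S \<and> v \<in> S}"
  have "?I = {z} \<or> ?I = S"
  proof (rule L.ideal_cases)
    show "?I \<subseteq> S"
    proof
      fix x assume "x \<in> ?I"
      then obtain u v where "x = u \<cdot> a \<cdot> v" "u \<in> S" "v \<in> S" by blast
      thus "x \<in> S" using a by simp
    qed
    have "z = z \<cdot> a \<cdot> z" using a by simp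
    thus "z \<in> ?I" using L.zS by blast
    show "\<forall>x\<in>?I. \<forall>s\<in>S. s \<cdot> x \<in> ?I \<and> x \<cdot> s \<in> ?I"
    proof (intro ballI)
      fix x s assume "x \<in> ?I" "s \<in> S"
      then obtain u v where "x = u \<cdot> a \<cdot> v" "u \<in> S" "v \<in> S" by blast
      hence "s \<cdot> x = (s \<cdot> u) \<cdot> a \<cdot> v" "x \<cdot> s = u \<cdot> a \<cdot> (v \<cdot> s)"
        using a \<open>s \<in> S\<close> by (simp_all add: L.assoc)
      thus "s \<cdot> x \<in> ?I \<and> x \<cdot> s \<in> ?I" using \<open>u\<in>S\<close> \<open>v\<in>S\<close> \<open>s\<in>S\<close> by blast
    qed
  qed
  moreover have "?I \<noteq> {z}" using uv by blast
  ultimately have "a \<in> ?I" using a by blast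
  thus ?thesis by blast
qed

definition rp :: "'a \<Rightarrow> 'a set" where "rp a = {a \<cdot> s | s. s \<in> S}"

lemma rp_eq: "R.lp a = rp a" unfolding R.lp_def rp_def by simp

lemma rp_min: assumes "a \<in> S" "a \<noteq> z"
  shows "zero_minimal_right_ideal S f z (rp a) \<and> a \<in> rp a"
proof -
  have lf: "left_ideal S (\<lambda>x y. f y x) I = right_ideal S f I" for I by (rule left_flip)
  show ?thesis using R.lp_min[OF assms] unfolding rp_eq zero_minimal_left_ideal_def
      zero_minimal_right_ideal_def lf .
qed

lemma rp_same: assumes "a \<in> S" "a \<noteq> z" "b \<in> rp a" "b \<noteq> z" shows "rp b = rp a"
  using R.lp_same[of a b] assms unfolding rp_eq by blast

lemma rp_self: assumes "a \<in> S" "a \<noteq> z" shows "\<exists>s\<in>S. a = a \<cdot> s"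
proof -
  have "a \<in> rp a" using rp_min[OF assms] by blast
  thus ?thesis unfolding rp_def by blast
qed

lemma lp_mem: "s \<in> S \<Longrightarrow> s \<cdot> a \<in> L.lp a" unfolding L.lp_def by blast
lemma rp_mem: "s \<in> S \<Longrightarrow> a \<cdot> s \<in> rp a" unfolding rp_def by blast
lemma lp_E: "x \<in> L.lp a \<Longrightarrow> \<exists>s\<in>S. x = s \<cdot> a" unfolding L.lp_def by blast
lemma rp_E: "x \<in> rp a \<Longrightarrow> \<exists>s\<in>S. x = a \<cdot> s" unfolding rp_def by blast

lemma idem_ex: "\<exists>e\<in>S. e \<noteq> z \<and> e \<cdot> e = e"
proof -
  obtain a where a: "a \<in> S" "a \<noteq> z" using L.Snz by blast
  obtain u v where uv: "u \<in> S" "v \<in> S" "a = u \<cdot> a \<cdot> v" using SaS[OF a] by blast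
  have av: "a \<cdot> v \<noteq> z"
  proof
    assume "a \<cdot> v = z"
    hence "u \<cdot> a \<cdot> v = z" using uv a by (simp add: L.assoc)
    thus False using uv a by simp
  qed
  have vz: "v \<noteq> z" using av a by auto
  have "a = (u \<cdot> a) \<cdot> v" using uv by simp
  hence "a \<in> L.lp v" using lp_mem[of "u \<cdot> a" v] uv a by simp
  hence lpav: "L.lp a = L.lp v" using L.lp_same[OF uv(2) vz _ a(2)] by simp
  have "v \<in> L.lp a" using L.lp_min[OF uv(2) vz] lpav by simp
  hence vv: "v \<cdot> v \<noteq> z"
    using L.annih[OF conjunct1[OF L.lp_min[OF a]] uv(2), of a v] conjunct2[OF L.lp_min[OF a]] av vz
    by blast
  define g where "g = v"
  have g: "g \<in> S" "g \<noteq> z" "g \<cdot> g \<noteq> z" using uv vz vv g_def by auto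
  have ggS: "g \<cdot> g \<in> S" using g by simp
  have "g \<cdot> g \<in> L.lp g" using lp_mem[OF g(1)] .
  hence "L.lp (g \<cdot> g) = L.lp g" using L.lp_same[OF g(1,2) _ g(3)] by simp
  hence "g \<in> L.lp (g \<cdot> g)" using L.lp_min[OF g(1,2)] by simp
  then obtain w where w: "w \<in> S" "g = w \<cdot> (g \<cdot> g)" using lp_E by blast
  have "g \<cdot> g \<in> rp g" using rp_mem[OF g(1)] .
  hence "rp (g \<cdot> g) = rp g" using rp_same[OF g(1,2) _ g(3)] by simp
  hence "g \<in> rp (g \<cdot> g)" using rp_min[OF g(1,2)] by simp
  then obtain w' where w': "w' \<in> S" "g = (g \<cdot> g) \<cdot> w'" using rp_E by blast
  define e where "e = g \<cdot> w'"
  have eS: "e \<in> S" using g w' e_def by simp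
  have ge: "g \<cdot> e = g"
  proof -
    have "g \<cdot> e = (g \<cdot> g) \<cdot> w'" using w'(1) g(1) e_def by (simp add: L.assoc)
    also have "\<dots> = g" by (simp only: w'(2)[symmetric])
    finally show ?thesis .
  qed
  have inj: "g \<cdot> s = g \<cdot> t" if "s \<in> S" "t \<in> S" "g \<cdot> (g \<cdot> s) = g \<cdot> (g \<cdot> t)" for s t
  proof -
    have "g \<cdot> s = w \<cdot> (g \<cdot> g) \<cdot> s" by (simp only: w(2)[symmetric])
    also have "\<dots> = w \<cdot> (g \<cdot> (g \<cdot> s))" using w(1) g(1) that(1) by (simp add: L.assoc)
    also have "\<dots> = w \<cdot> (g \<cdot> (g \<cdot> t))" using that(3) by simp
    also have "\<dots> = w \<cdot> (g \<cdot> g) \<cdot> t" using w(1) g(1) that(2) by (simp add: L.assoc)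
    also have "\<dots> = g \<cdot> t" by (simp only: w(2)[symmetric])
    finally show ?thesis .
  qed
  have "g \<cdot> (g \<cdot> (w' \<cdot> e)) = g \<cdot> (g \<cdot> w')"
  proof -
    have "g \<cdot> (g \<cdot> (w' \<cdot> e)) = (g \<cdot> e) \<cdot> e" using g(1) w'(1) eS e_def by (simp add: L.assoc)
    also have "\<dots> = g" using ge by simp
    also have "\<dots> = g \<cdot> (g \<cdot> w')" using ge e_def by simp
    finally show ?thesis .
  qed
  hence "g \<cdot> (w' \<cdot> e) = g \<cdot> w'" using inj w' eS by simp
  hence "e \<cdot> e = e" using e_def g(1) w'(1) eS by (simp add: L.assoc)
  moreover have "e \<noteq> z" using ge g by auto
  ultimately show ?thesis using eS by blast
qed

end


locale czs3 = czs2 S f z for S f z +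
  fixes e assumes eS: "e \<in> S" and ez: "e \<noteq> z" and ee: "f e e = e"
begin

definition H where "H = {g\<in>S. g \<noteq> z \<and> e \<cdot> g = g \<and> g \<cdot> e = g}"
definition Ri where "Ri = {rp a | a. a \<in> S \<and> a \<noteq> z}"
definition Qi where "Qi = {L.lp a | a. a \<in> S \<and> a \<noteq> z}"
definition reprR where "reprR \<rho> = (if \<rho> = rp e then e else SOME r. r \<in> \<rho> \<and> r \<in> S \<and> r \<noteq> z \<and> r \<cdot> e = r)"
definition reprQ where "reprQ \<rho> = (if \<rho> = L.lp e then e else SOME r. r \<in> \<rho> \<and> r \<in> S \<and> r \<noteq> z \<and> e \<cdot> r = r)"
definition RI where "RI = reprR ` Ri"
definition QL where "QL = reprQ ` Qi"

lemma SeS: assumes a: "a \<in> S" "a \<noteq> z" shows "\<exists>u\<in>S. \<exists>v\<in>S. a = u \<cdot> e \<cdot> v"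
proof -
  let ?I = "{u \<cdot> e \<cdot> v | u v. u \<in> S \<and> v \<in> S}"
  have "?I = {z} \<or> ?I = S"
  proof (rule L.ideal_cases)
    show "?I \<subseteq> S"
    proof
      fix x assume "x \<in> ?I"
      then obtain u v where "x = u \<cdot> e \<cdot> v" "u \<in> S" "v \<in> S" by blast
      thus "x \<in> S" using eS by simp
    qed
    have "z = z \<cdot> e \<cdot> z" using eS by simp
    thus "z \<in> ?I" using L.zS by blast
    show "\<forall>x\<in>?I. \<forall>s\<in>S. s \<cdot> x \<in> ?I \<and> x \<cdot> s \<in> ?I"
    proof (intro ballI)
      fix x s assume "x \<in> ?I" "s \<in> S"
      then obtain u v where "x = u \<cdot> e \<cdot> v" "u \<in> S" "v \<in> S" by blast
      hence "s \<cdot> x = (s \<cdot> u) \<cdot> e \<cdot> v" "x \<cdot> s = u \<cdot> e \<cdot> (v \<cdot> s)"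
        using eS \<open>s \<in> S\<close> by (simp_all add: L.assoc)
      thus "s \<cdot> x \<in> ?I \<and> x \<cdot> s \<in> ?I" using \<open>u\<in>S\<close> \<open>v\<in>S\<close> \<open>s\<in>S\<close> by blast
    qed
  qed
  moreover have "e \<in> ?I"
  proof -
    have "e = e \<cdot> e \<cdot> e" using ee by simp
    thus ?thesis using eS by blast
  qed
  ultimately have "a \<in> ?I" using a ez by blast
  thus ?thesis by blast
qed

lemma ex_r: assumes "\<rho> \<in> Ri" shows "\<exists>r. r \<in> \<rho> \<and> r \<in> S \<and> r \<noteq> z \<and> r \<cdot> e = r"
proof -
  obtain a where a: "\<rho> = rp a" "a \<in> S" "a \<noteq> z" using assms unfolding Ri_def by blast
  obtain u v where uv: "u \<in> S" "v \<in> S" "a = u \<cdot> e \<cdot> v" using SeS[OF a(2,3)] by blast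
  define r where "r = u \<cdot> e"
  have rS: "r \<in> S" using uv eS r_def by simp
  have re: "r \<cdot> e = r" using uv eS ee r_def by (simp add: L.assoc)
  have rz: "r \<noteq> z"
  proof
    assume "r = z" hence "a = z \<cdot> v" using uv r_def by simp
    thus False using uv a by simp
  qed
  have "a \<in> rp r" using rp_mem[OF uv(2), of r] uv r_def by simp
  hence "rp a = rp r" using rp_same[OF rS rz _ a(3)] by simp
  hence "r \<in> rp a" using rp_min[OF rS rz] by simp
  thus ?thesis using a rS rz re by blast
qed

lemma ex_q: assumes "\<rho> \<in> Qi" shows "\<exists>r. r \<in> \<rho> \<and> r \<in> S \<and> r \<noteq> z \<and> e \<cdot> r = r"
proof -
  obtain a where a: "\<rho> = L.lp a" "a \<in> S" "a \<noteq> z" using assms unfolding Qi_def by blast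
  obtain u v where uv: "u \<in> S" "v \<in> S" "a = u \<cdot> e \<cdot> v" using SeS[OF a(2,3)] by blast
  define r where "r = e \<cdot> v"
  have rS: "r \<in> S" using uv eS r_def by simp
  have re: "e \<cdot> r = r" using uv eS ee r_def by (simp add: L.assoc[symmetric])
  have aur: "a = u \<cdot> r" using uv eS r_def by (simp add: L.assoc)
  have rz: "r \<noteq> z"
  proof
    assume "r = z" hence "a = u \<cdot> z" using aur by simp
    thus False using uv a by simp
  qed
  have "a = u \<cdot> r" by (rule aur)
  hence "a \<in> L.lp r" using lp_mem[OF uv(1), of r] by simp
  hence "L.lp a = L.lp r" using L.lp_same[OF rS rz _ a(3)] by simp
  hence "r \<in> L.lp a" using L.lp_min[OF rS rz] by simp
  thus ?thesis using a rS rz re by blast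
qed

lemma e_Ri: "rp e \<in> Ri" unfolding Ri_def using eS ez by blast
lemma e_Qi: "L.lp e \<in> Qi" unfolding Qi_def using eS ez by blast

lemma reprR_prop: assumes "\<rho> \<in> Ri"
  shows "reprR \<rho> \<in> \<rho> \<and> reprR \<rho> \<in> S \<and> reprR \<rho> \<noteq> z \<and> reprR \<rho> \<cdot> e = reprR \<rho>"
proof (cases "\<rho> = rp e")
  case True
  thus ?thesis using rp_min[OF eS ez] eS ez ee unfolding reprR_def by simp
next
  case False
  thus ?thesis using someI_ex[OF ex_r[OF assms]] unfolding reprR_def by simp
qed

lemma reprQ_prop: assumes "\<rho> \<in> Qi"
  shows "reprQ \<rho> \<in> \<rho> \<and> reprQ \<rho> \<in> S \<and> reprQ \<rho> \<noteq> z \<and> e \<cdot> reprQ \<rho> = reprQ \<rho>"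
proof (cases "\<rho> = L.lp e")
  case True
  thus ?thesis using L.lp_min[OF eS ez] eS ez ee unfolding reprQ_def by simp
next
  case False
  thus ?thesis using someI_ex[OF ex_q[OF assms]] unfolding reprQ_def by simp
qed

lemma RI_prop: assumes "r \<in> RI" shows "r \<in> S" "r \<noteq> z" "r \<cdot> e = r" "reprR (rp r) = r"
proof -
  obtain \<rho> where \<rho>: "\<rho> \<in> Ri" "r = reprR \<rho>" using assms unfolding RI_def by blast
  obtain a where a: "\<rho> = rp a" "a \<in> S" "a \<noteq> z" using \<rho>(1) unfolding Ri_def by blast
  show "r \<in> S" "r \<noteq> z" "r \<cdot> e = r" using reprR_prop[OF \<rho>(1)] \<rho>(2) by auto
  have "r \<in> rp a" using reprR_prop[OF \<rho>(1)] \<rho>(2) a(1) by simp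
  hence "rp r = \<rho>" using rp_same[OF a(2,3)] \<open>r \<noteq> z\<close> a(1) by simp
  thus "reprR (rp r) = r" using \<rho>(2) by simp
qed

lemma QL_prop: assumes "r \<in> QL" shows "r \<in> S" "r \<noteq> z" "e \<cdot> r = r" "reprQ (L.lp r) = r"
proof -
  obtain \<rho> where \<rho>: "\<rho> \<in> Qi" "r = reprQ \<rho>" using assms unfolding QL_def by blast
  obtain a where a: "\<rho> = L.lp a" "a \<in> S" "a \<noteq> z" using \<rho>(1) unfolding Qi_def by blast
  show "r \<in> S" "r \<noteq> z" "e \<cdot> r = r" using reprQ_prop[OF \<rho>(1)] \<rho>(2) by auto
  have "r \<in> L.lp a" using reprQ_prop[OF \<rho>(1)] \<rho>(2) a(1) by simp
  hence "L.lp r = \<rho>" using L.lp_same[OF a(2,3)] \<open>r \<noteq> z\<close> a(1) by simp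
  thus "reprQ (L.lp r) = r" using \<rho>(2) by simp
qed

lemma e_RI: "e \<in> RI" unfolding RI_def using e_Ri reprR_def by force
lemma e_QL: "e \<in> QL" unfolding QL_def using e_Qi reprQ_def by force

lemma fin_RI: assumes "finite {R. right_ideal S f R}" shows "finite RI"
proof -
  have "Ri \<subseteq> {R. right_ideal S f R}"
  proof
    fix x assume "x \<in> Ri"
    then obtain a where "x = rp a" "a \<in> S" "a \<noteq> z" unfolding Ri_def by blast
    thus "x \<in> {R. right_ideal S f R}" using rp_min unfolding zero_minimal_right_ideal_def by blast
  qed
  hence "finite Ri" using assms finite_subset by blast
  thus ?thesis unfolding RI_def by simp
qed

lemma fin_QL: assumes "finite {R. left_ideal S f R}" shows "finite QL"
proof -
  have "Qi \<subseteq> {R. left_ideal S f R}"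
  proof
    fix x assume "x \<in> Qi"
    then obtain a where "x = L.lp a" "a \<in> S" "a \<noteq> z" unfolding Qi_def by blast
    thus "x \<in> {R. left_ideal S f R}" using L.lp_min unfolding zero_minimal_left_ideal_def by blast
  qed
  hence "finite Qi" using assms finite_subset by blast
  thus ?thesis unfolding QL_def by simp
qed

lemma HI: "h \<in> H \<Longrightarrow> h \<in> S \<and> h \<noteq> z \<and> e \<cdot> h = h \<and> h \<cdot> e = h" unfolding H_def by blast
lemma e_H: "e \<in> H" unfolding H_def using eS ez ee by blast

lemma hinv: assumes h: "h \<in> H" shows "\<exists>y\<in>H. h \<cdot> y = e \<and> y \<cdot> h = e"
proof -
  have h': "h \<in> S" "h \<noteq> z" "e \<cdot> h = h" "h \<cdot> e = h" using HI[OF h] by auto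
  have "h \<in> rp e" using rp_mem[OF h'(1), of e] h'(3) by simp
  hence "rp h = rp e" using rp_same[OF eS ez _ h'(2)] by simp
  hence "e \<in> rp h" using rp_min[OF eS ez] by simp
  then obtain y1 where y1: "y1 \<in> S" "e = h \<cdot> y1" using rp_E by blast
  have "h \<in> L.lp e" using lp_mem[OF h'(1), of e] h'(4) by simp
  hence "L.lp h = L.lp e" using L.lp_same[OF eS ez _ h'(2)] by simp
  hence "e \<in> L.lp h" using L.lp_min[OF eS ez] by simp
  then obtain y2 where y2: "y2 \<in> S" "e = y2 \<cdot> h" using lp_E by blast
  define y where "y = e \<cdot> y1 \<cdot> e"
  define y' where "y' = e \<cdot> y2 \<cdot> e"
  have yS: "y \<in> S" "y' \<in> S" using y_def y'_def eS y1(1) y2(1) by auto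
  have hy: "h \<cdot> y = e"
  proof -
    have "h \<cdot> y = (h \<cdot> e) \<cdot> y1 \<cdot> e" using y_def eS y1(1) h'(1) by (simp add: L.assoc)
    also have "\<dots> = (h \<cdot> y1) \<cdot> e" using h'(4) by simp
    also have "\<dots> = e" using y1(2)[symmetric] ee by simp
    finally show ?thesis .
  qed
  have yh: "y' \<cdot> h = e"
  proof -
    have "y' \<cdot> h = e \<cdot> (y2 \<cdot> (e \<cdot> h))" using y'_def eS y2(1) h'(1) by (simp add: L.assoc)
    also have "\<dots> = e \<cdot> (y2 \<cdot> h)" using h'(3) by simp
    also have "\<dots> = e" using y2(2)[symmetric] ee by simp
    finally show ?thesis .
  qed
  have "y' = y' \<cdot> e" using y'_def eS y2(1) ee by (simp add: L.assoc)
  also have "\<dots> = y' \<cdot> (h \<cdot> y)" using hy by simp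
  also have "\<dots> = (y' \<cdot> h) \<cdot> y" using yS h'(1) by (simp add: L.assoc)
  also have "\<dots> = e \<cdot> y" using yh by simp
  also have "\<dots> = y" using y_def eS y1(1) ee by (simp add: L.assoc[symmetric])
  finally have yy: "y' = y" .
  have "y \<in> H" unfolding H_def
  proof (intro CollectI conjI)
    show "y \<in> S" using yS by simp
    show "y \<noteq> z" using hy ez h'(1) by auto
    show "e \<cdot> y = y" using y_def eS y1(1) ee by (simp add: L.assoc[symmetric])
    show "y \<cdot> e = y" using y_def eS y1(1) ee by (simp add: L.assoc)
  qed
  thus ?thesis using hy yh yy by blast
qed

lemma hmul: assumes "a \<in> H" "b \<in> H" shows "a \<cdot> b \<in> H"
proof -
  have a: "a \<in> S" "a \<noteq> z" "e \<cdot> a = a" "a \<cdot> e = a" using HI[OF assms(1)] by auto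
  have b: "b \<in> S" "b \<noteq> z" "e \<cdot> b = b" "b \<cdot> e = b" using HI[OF assms(2)] by auto
  obtain y where y: "y \<in> H" "y \<cdot> a = e" using hinv[OF assms(1)] by blast
  have yS: "y \<in> S" using HI[OF y(1)] by simp
  have yab: "y \<cdot> (a \<cdot> b) = b" using y yS a b by (simp add: L.assoc[symmetric])
  have "a \<cdot> b \<noteq> z"
  proof
    assume "a \<cdot> b = z"
    hence "b = y \<cdot> z" using yab by simp
    thus False using yS b by simp
  qed
  moreover have "e \<cdot> (a \<cdot> b) = a \<cdot> b" using a b eS by (simp add: L.assoc[symmetric])
  moreover have "a \<cdot> b \<cdot> e = a \<cdot> b" using a b eS by (simp add: L.assoc)
  ultimately show ?thesis unfolding H_def using a b by simp
qed

lemma H_max: "maximal_subgroup S f H"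
proof -
  have sub: "is_subgroup_of S f H" unfolding is_subgroup_of_def
  proof (intro conjI)
    show "H \<subseteq> S" unfolding H_def by blast
    show "\<forall>x\<in>H. \<forall>y\<in>H. x \<cdot> y \<in> H" using hmul by blast
    show "\<exists>e\<in>H. \<forall>x\<in>H. e \<cdot> x = x \<and> x \<cdot> e = x \<and> (\<exists>y\<in>H. x \<cdot> y = e \<and> y \<cdot> x = e)"
      using e_H HI hinv by blast
  qed
  have "K = H" if K: "is_subgroup_of S f K" "H \<subseteq> K" for K
  proof -
    obtain e' where e': "e' \<in> K" "\<forall>x\<in>K. e' \<cdot> x = x \<and> x \<cdot> e' = x \<and> (\<exists>y\<in>K. x \<cdot> y = e' \<and> y \<cdot> x = e')"
      using K(1) unfolding is_subgroup_of_def by blast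
    have KS: "K \<subseteq> S" using K(1) unfolding is_subgroup_of_def by blast
    have eK: "e \<in> K" using e_H K(2) by blast
    obtain y where y: "y \<in> K" "y \<cdot> e = e'" using e' eK by blast
    have "e' = y \<cdot> (e \<cdot> e)" using y ee by simp
    also have "\<dots> = e' \<cdot> e" using y eS KS by (simp add: L.assoc[symmetric] subsetD)
    also have "\<dots> = e" using e' eK by blast
    finally have ee': "e' = e" .
    have "x \<in> H" if x: "x \<in> K" for x
    proof -
      have xS: "x \<in> S" using x KS by blast
      have ex: "e \<cdot> x = x" "x \<cdot> e = x" using e' x ee' by auto
      obtain w where w: "w \<in> K" "x \<cdot> w = e" using e' x ee' by blast
      have "x \<noteq> z" using w KS ez by (auto simp: subsetD)
      thus ?thesis unfolding H_def using xS ex by blast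
    qed
    thus ?thesis using K(2) by blast
  qed
  thus ?thesis unfolding maximal_subgroup_def using sub by blast
qed


lemma rinv: assumes "r \<in> RI" shows "\<exists>r'\<in>S. r' \<cdot> r = e"
proof -
  have r: "r \<in> S" "r \<noteq> z" "r \<cdot> e = r" using RI_prop[OF assms] by auto
  have "r \<in> L.lp e" using lp_mem[OF r(1), of e] r(3) by simp
  hence "L.lp r = L.lp e" using L.lp_same[OF eS ez _ r(2)] by simp
  hence "e \<in> L.lp r" using L.lp_min[OF eS ez] by simp
  thus ?thesis using lp_E by metis
qed

lemma qinv: assumes "q \<in> QL" shows "\<exists>q'\<in>S. q \<cdot> q' = e"
proof -
  have q: "q \<in> S" "q \<noteq> z" "e \<cdot> q = q" using QL_prop[OF assms] by auto
  have "q \<in> rp e" using rp_mem[OF q(1), of e] q(3) by simp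
  hence "rp q = rp e" using rp_same[OF eS ez _ q(2)] by simp
  hence "e \<in> rp q" using rp_min[OF eS ez] by simp
  thus ?thesis using rp_E by metis
qed

lemma decomp: assumes s: "s \<in> S" "s \<noteq> z" shows "\<exists>r\<in>RI. \<exists>g\<in>H. \<exists>q\<in>QL. s = r \<cdot> g \<cdot> q"
proof -
  have rho: "rp s \<in> Ri" unfolding Ri_def using s by blast
  define r where "r = reprR (rp s)"
  have rRI: "r \<in> RI" unfolding RI_def r_def using rho by blast
  have r: "r \<in> S" "r \<noteq> z" "r \<cdot> e = r" using RI_prop[OF rRI] by auto
  have "r \<in> rp s" using reprR_prop[OF rho] r_def by simp
  hence "rp r = rp s" using rp_same[OF s] r(2) by simp
  hence "s \<in> rp r" using rp_min[OF s] by simp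
  then obtain t where t: "t \<in> S" "s = r \<cdot> t" using rp_E by blast
  have lam: "L.lp s \<in> Qi" unfolding Qi_def using s by blast
  define q where "q = reprQ (L.lp s)"
  have qQL: "q \<in> QL" unfolding QL_def q_def using lam by blast
  have q: "q \<in> S" "q \<noteq> z" "e \<cdot> q = q" using QL_prop[OF qQL] by auto
  have "q \<in> L.lp s" using reprQ_prop[OF lam] q_def by simp
  hence "L.lp q = L.lp s" using L.lp_same[OF s] q(2) by simp
  hence "s \<in> L.lp q" using L.lp_min[OF s] by simp
  then obtain t' where t': "t' \<in> S" "s = t' \<cdot> q" using lp_E by blast
  obtain r' where r': "r' \<in> S" "r' \<cdot> r = e" using rinv[OF rRI] by blast
  obtain q' where q': "q' \<in> S" "q \<cdot> q' = e" using qinv[OF qQL] by blast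
  define g where "g = e \<cdot> (r' \<cdot> s \<cdot> q') \<cdot> e"
  have gS: "g \<in> S" using g_def eS r'(1) q'(1) s(1) by simp
  have s1: "r \<cdot> r' \<cdot> s = s"
  proof -
    have "r \<cdot> r' \<cdot> s = r \<cdot> (r' \<cdot> r) \<cdot> t" using r(1) r'(1) t(1) by (simp add: t(2) L.assoc)
    also have "\<dots> = r \<cdot> t" using r'(2) r(3) by simp
    finally show ?thesis using t(2) by simp
  qed
  have s2: "s \<cdot> q' \<cdot> q = s"
  proof -
    have "s \<cdot> q' \<cdot> q = t' \<cdot> (q \<cdot> q') \<cdot> q" using q(1) q'(1) t'(1) by (simp add: t'(2) L.assoc)
    also have "\<dots> = t' \<cdot> q" using q'(2) q(3) q(1) t'(1) eS by (simp add: L.assoc)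
    finally show ?thesis using t'(2) by simp
  qed
  have "r \<cdot> g \<cdot> q = (r \<cdot> e) \<cdot> (r' \<cdot> s \<cdot> q') \<cdot> (e \<cdot> q)"
    using g_def r(1) q(1) eS r'(1) q'(1) s(1) by (simp add: L.assoc)
  also have "\<dots> = r \<cdot> (r' \<cdot> s \<cdot> q') \<cdot> q" by (simp only: r(3) q(3))
  also have "\<dots> = (r \<cdot> r' \<cdot> s) \<cdot> q' \<cdot> q" using r(1) q(1) r'(1) q'(1) s(1) by (simp add: L.assoc)
  also have "\<dots> = s" by (simp only: s1 s2)
  finally have rgq: "r \<cdot> g \<cdot> q = s" .
  have gz: "g \<noteq> z"
  proof
    assume "g = z" hence "s = r \<cdot> z \<cdot> q" using rgq by simp
    thus False using r(1) q(1) s(2) by simp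
  qed
  have "e \<cdot> g = g" using g_def eS ee r'(1) q'(1) s(1) by (simp add: L.assoc[symmetric])
  moreover have "g \<cdot> e = g" using g_def eS ee r'(1) q'(1) s(1) by (simp add: L.assoc)
  ultimately have "g \<in> H" unfolding H_def using gS gz by blast
  thus ?thesis using rRI qQL rgq by blast
qed

lemma coord: assumes r: "r \<in> RI" and g: "g \<in> H" and q: "q \<in> QL"
  and r': "r' \<in> S" "r' \<cdot> r = e" and q': "q' \<in> S" "q \<cdot> q' = e"
  shows "r' \<cdot> (r \<cdot> g \<cdot> q) \<cdot> q' = g"
proof -
  have rS: "r \<in> S" using RI_prop[OF r] by auto
  have qS: "q \<in> S" using QL_prop[OF q] by auto
  have gg: "g \<in> S" "e \<cdot> g = g" "g \<cdot> e = g" using HI[OF g] by auto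
  have "r' \<cdot> (r \<cdot> g \<cdot> q) \<cdot> q' = (r' \<cdot> r) \<cdot> g \<cdot> (q \<cdot> q')"
    using rS qS gg(1) r'(1) q'(1) by (simp add: L.assoc)
  also have "\<dots> = g" using r'(2) q'(2) gg by simp
  finally show ?thesis .
qed

lemma nzc: assumes r: "r \<in> RI" and g: "g \<in> H" and q: "q \<in> QL" shows "r \<cdot> g \<cdot> q \<noteq> z"
proof
  assume h: "r \<cdot> g \<cdot> q = z"
  obtain r' where r': "r' \<in> S" "r' \<cdot> r = e" using rinv[OF r] by blast
  obtain q' where q': "q' \<in> S" "q \<cdot> q' = e" using qinv[OF q] by blast
  have "g = r' \<cdot> z \<cdot> q'" using coord[OF r g q r' q'] h by simp
  thus False using r' q' HI[OF g] by simp
qed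

lemma rgqS: assumes r: "r \<in> RI" and g: "g \<in> H" and q: "q \<in> QL" shows "r \<cdot> g \<cdot> q \<in> S"
  using RI_prop[OF r] QL_prop[OF q] HI[OF g] by simp

lemma uniq: assumes r: "r \<in> RI" and g: "g \<in> H" and q: "q \<in> QL"
  and r2: "r2 \<in> RI" and g2: "g2 \<in> H" and q2: "q2 \<in> QL"
  and eq: "r \<cdot> g \<cdot> q = r2 \<cdot> g2 \<cdot> q2"
  shows "r = r2 \<and> g = g2 \<and> q = q2"
proof -
  have rS: "r \<in> S" "r2 \<in> S" "r \<noteq> z" "r2 \<noteq> z" using RI_prop[OF r] RI_prop[OF r2] by auto
  have qS: "q \<in> S" "q2 \<in> S" "q \<noteq> z" "q2 \<noteq> z" using QL_prop[OF q] QL_prop[OF q2] by auto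
  have gS: "g \<in> S" "g2 \<in> S" using HI[OF g] HI[OF g2] by auto
  let ?s = "r \<cdot> g \<cdot> q"
  have sS: "?s \<in> S" using rgqS[OF r g q] .
  have sz: "?s \<noteq> z" using nzc[OF r g q] .
  have "?s \<in> rp r" using rp_mem[of "g \<cdot> q" r] rS gS qS by (simp add: L.assoc)
  hence e1: "rp ?s = rp r" using rp_same[of r ?s] rS sz by blast
  have "?s \<in> rp r2" using rp_mem[of "g2 \<cdot> q2" r2] rS gS qS eq by (simp add: L.assoc)
  hence e2: "rp ?s = rp r2" using rp_same[of r2 ?s] rS sz by blast
  have rr: "r = r2" using RI_prop(4)[OF r] RI_prop(4)[OF r2] e1 e2 by metis
  have "?s \<in> L.lp q" using lp_mem[of "r \<cdot> g" q] rS gS qS by simp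
  hence e3: "L.lp ?s = L.lp q" using L.lp_same[of q ?s] qS sz by blast
  have "?s \<in> L.lp q2" using lp_mem[of "r2 \<cdot> g2" q2] rS gS qS eq by simp
  hence e4: "L.lp ?s = L.lp q2" using L.lp_same[of q2 ?s] qS sz by blast
  have qq: "q = q2" using QL_prop(4)[OF q] QL_prop(4)[OF q2] e3 e4 by metis
  obtain r' where r': "r' \<in> S" "r' \<cdot> r = e" using rinv[OF r] by blast
  obtain q' where q': "q' \<in> S" "q \<cdot> q' = e" using qinv[OF q] by blast
  have "g = r' \<cdot> ?s \<cdot> q'" using coord[OF r g q r' q'] by simp
  also have "\<dots> = g2" using coord[OF r2 g2 q2, of r' q'] r' q' rr qq eq by simp
  finally show ?thesis using rr qq by simp
qed

lemma qr_H: assumes "q \<in> QL" "r \<in> RI" "q \<cdot> r \<noteq> z" shows "q \<cdot> r \<in> H"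
proof -
  have q: "q \<in> S" "e \<cdot> q = q" using QL_prop[OF assms(1)] by auto
  have r: "r \<in> S" "r \<cdot> e = r" using RI_prop[OF assms(2)] by auto
  have "e \<cdot> (q \<cdot> r) = q \<cdot> r" using q r eS by (simp add: L.assoc[symmetric])
  moreover have "q \<cdot> r \<cdot> e = q \<cdot> r" using q r eS by (simp add: L.assoc)
  ultimately show ?thesis unfolding H_def using q r assms(3) by simp
qed

end



lemma words_app: "u @ v \<in> words X \<longleftrightarrow> (u \<noteq> [] \<or> v \<noteq> []) \<and> set u \<subseteq> X \<and> set v \<subseteq> X"
  unfolding words_def by auto

lemma rstepI: "(u, v) \<in> R \<Longrightarrow> (w1 @ u @ w2, w1 @ v @ w2) \<in> rstep R"
  unfolding rstep_def by blast

lemma rstepE: "(a, b) \<in> rstep R \<Longrightarrow> (\<And>w1 u v w2. a = w1 @ u @ w2 \<Longrightarrow> b = w1 @ v @ w2 \<Longrightarrow> (u, v) \<in> R \<Longrightarrow> P) \<Longrightarrow> P"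
  unfolding rstep_def by blast

lemma rstep_ctx: "(a, b) \<in> rstep R \<Longrightarrow> (p @ a @ s, p @ b @ s) \<in> rstep R"
proof (elim rstepE)
  fix w1 u v w2 assume "a = w1 @ u @ w2" "b = w1 @ v @ w2" "(u, v) \<in> R"
  thus "(p @ a @ s, p @ b @ s) \<in> rstep R" using rstepI[of u v R "p @ w1" "w2 @ s"] by simp
qed

lemma rsteps_ctx: "(a, b) \<in> (rstep R)\<^sup>* \<Longrightarrow> (p @ a @ s, p @ b @ s) \<in> (rstep R)\<^sup>*"
proof (induction rule: rtrancl_induct)
  case base thus ?case by simp
next
  case (step y z) thus ?case using rstep_ctx[of y z R p s] by (meson rtrancl.rtrancl_into_rtrancl)
qed

lemma rstep_words:
  assumes rs: "rewriting_system X R" and st: "(a, b) \<in> rstep R"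
  shows "a \<in> words X \<longleftrightarrow> b \<in> words X"
  using st
proof (elim rstepE)
  fix w1 u v w2 assume h: "a = w1 @ u @ w2" "b = w1 @ v @ w2" "(u, v) \<in> R"
  have "u \<in> words X" "v \<in> words X" using rs h(3) unfolding rewriting_system_def by auto
  thus "a \<in> words X \<longleftrightarrow> b \<in> words X" using h unfolding words_def by auto
qed

lemma rsteps_words:
  assumes rs: "rewriting_system X R" and st: "(a, b) \<in> (rstep R)\<^sup>*" and a: "a \<in> words X"
  shows "b \<in> words X"
  using st a by (induction rule: rtrancl_induct) (use rstep_words[OF rs] in blast)+

lemma rcong_words:
  assumes rs: "rewriting_system X R" and st: "(a, b) \<in> rcong R" and a: "a \<in> words X"
  shows "b \<in> words X"
  using st a unfolding rcong_def by (induction rule: rtrancl_induct) (use rstep_words[OF rs] in blast)+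

definition nrel :: "'b set \<Rightarrow> ('b list \<times> 'b list) set \<Rightarrow> ('b list \<times> 'b list) set" where
  "nrel X R = {(v, u). u \<in> words X \<and> (u, v) \<in> rstep R}"

lemma noeth_wf: "noetherian X R \<longleftrightarrow> wf (nrel X R)"
proof
  assume n: "noetherian X R"
  show "wf (nrel X R)" unfolding wf_iff_no_infinite_down_chain
  proof
    assume "\<exists>c. \<forall>i. (c (Suc i), c i) \<in> nrel X R"
    then obtain c where c: "\<forall>i. (c (Suc i), c i) \<in> nrel X R" by blast
    hence "\<forall>i. c i \<in> words X" "\<forall>i. (c i, c (Suc i)) \<in> rstep R" unfolding nrel_def by auto
    thus False using n unfolding noetherian_def by blast
  qed
next
  assume w: "wf (nrel X R)"
  show "noetherian X R" unfolding noetherian_def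
  proof
    assume "\<exists>c :: nat \<Rightarrow> 'a list. (\<forall>i. c i \<in> words X) \<and> (\<forall>i. (c i, c (Suc i)) \<in> rstep R)"
    then obtain c :: "nat \<Rightarrow> 'a list" where "\<forall>i. c i \<in> words X" "\<forall>i. (c i, c (Suc i)) \<in> rstep R" by blast
    hence "\<forall>i. (c (Suc i), c i) \<in> nrel X R" unfolding nrel_def by auto
    thus False using w unfolding wf_iff_no_infinite_down_chain by blast
  qed
qed

definition irr :: "('b list \<times> 'b list) set \<Rightarrow> 'b list \<Rightarrow> bool" where
  "irr R u \<longleftrightarrow> (\<nexists>v. (u, v) \<in> rstep R)"

lemma nf_exists:
  assumes rs: "rewriting_system X R" and w: "wf (nrel X R)" and u: "u \<in> words X"
  shows "\<exists>v. (u, v) \<in> (rstep R)\<^sup>* \<and> irr R v"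
  using w u
proof (induction u rule: wf_induct_rule)
  case (less u)
  show ?case
  proof (cases "irr R u")
    case True thus ?thesis by blast
  next
    case False
    then obtain v where v: "(u, v) \<in> rstep R" unfolding irr_def by blast
    hence "v \<in> words X" using rstep_words[OF rs v] less.prems by blast
    moreover have "(v, u) \<in> nrel X R" using v less.prems unfolding nrel_def by blast
    ultimately obtain w where "(v, w) \<in> (rstep R)\<^sup>*" "irr R w" using less.IH by blast
    thus ?thesis using v by (meson converse_rtrancl_into_rtrancl)
  qed
qed

lemma CR:
  assumes rs: "rewriting_system X R" and c: "confluent X R" and u: "u \<in> words X"
    and uv: "(u, v) \<in> rcong R"
  shows "\<exists>w. (u, w) \<in> (rstep R)\<^sup>* \<and> (v, w) \<in> (rstep R)\<^sup>*"
  using uv unfolding rcong_def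
proof (induction rule: rtrancl_induct)
  case base thus ?case by blast
next
  case (step y y')
  then obtain w where w: "(u, w) \<in> (rstep R)\<^sup>*" "(y, w) \<in> (rstep R)\<^sup>*" by blast
  have yw: "y \<in> words X" using rcong_words[OF rs _ u] step.hyps(1) unfolding rcong_def by blast
  show ?case
  proof (cases "(y, y') \<in> rstep R")
    case True
    obtain w' where "(w, w') \<in> (rstep R)\<^sup>*" "(y', w') \<in> (rstep R)\<^sup>*"
      using c yw w(2) True unfolding confluent_def by blast
    thus ?thesis using w(1) by (meson rtrancl_trans)
  next
    case False
    hence "(y', y) \<in> rstep R" using step.hyps(2) by blast
    thus ?thesis using w by (meson converse_rtrancl_into_rtrancl)
  qed
qed

lemma irr_rsteps: "irr R u \<Longrightarrow> (u, v) \<in> (rstep R)\<^sup>* \<Longrightarrow> v = u"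
  unfolding irr_def by (metis converse_rtranclE)

lemma val_rsteps:
  assumes rs: "rewriting_system X R" and pres: "\<And>a b. a \<in> words X \<Longrightarrow> (a, b) \<in> rstep R \<Longrightarrow> val a = val b"
    and st: "(u, v) \<in> (rstep R)\<^sup>*" and u: "u \<in> words X"
  shows "val u = val v"
  using st
proof (induction rule: rtrancl_induct)
  case base thus ?case by simp
next
  case (step y y')
  have "y \<in> words X" using rsteps_words[OF rs step.hyps(1) u] .
  thus ?case using step pres by simp
qed

lemma val_rcong:
  assumes rs: "rewriting_system X R" and pres: "\<And>a b. a \<in> words X \<Longrightarrow> (a, b) \<in> rstep R \<Longrightarrow> val a = val b"
    and st: "(u, v) \<in> rcong R" and u: "u \<in> words X"
  shows "val u = val v"
  using st unfolding rcong_def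
proof (induction rule: rtrancl_induct)
  case base thus ?case by simp
next
  case (step y y')
  have yw: "y \<in> words X" using rcong_words[OF rs _ u] step.hyps(1) unfolding rcong_def by blast
  show ?case
  proof (cases "(y, y') \<in> rstep R")
    case True thus ?thesis using step.IH pres yw by simp
  next
    case False
    hence b: "(y', y) \<in> rstep R" using step.hyps(2) by blast
    moreover have "y' \<in> words X" using rstep_words[OF rs b] yw by blast
    ultimately show ?thesis using step.IH pres by simp
  qed
qed

lemma complete_from_nf:
  assumes rs: "rewriting_system X R" and w: "wf (nrel X R)"
    and pres: "\<And>a b. a \<in> words X \<Longrightarrow> (a, b) \<in> rstep R \<Longrightarrow> val a = val b"
    and inj: "\<And>a b. a \<in> words X \<Longrightarrow> b \<in> words X \<Longrightarrow> irr R a \<Longrightarrow> irr R b \<Longrightarrow> val a = val b \<Longrightarrow> a = b"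
  shows "complete_rs X R" and "\<And>u v. u \<in> words X \<Longrightarrow> v \<in> words X \<Longrightarrow> val u = val v \<longleftrightarrow> (u, v) \<in> rcong R"
proof -
  have VR: "val a = val b" if "(a, b) \<in> (rstep R)\<^sup>*" "a \<in> words X" for a b
    using val_rsteps[of X R val, OF rs pres that] .
  show "complete_rs X R" unfolding complete_rs_def
  proof
    show "noetherian X R" using w noeth_wf by blast
    show "confluent X R" unfolding confluent_def
    proof (intro ballI allI impI)
      fix u v v' assume u: "u \<in> words X" and h: "(u, v) \<in> (rstep R)\<^sup>* \<and> (u, v') \<in> (rstep R)\<^sup>*"
      have vw: "v \<in> words X" "v' \<in> words X" using rsteps_words[OF rs _ u] h by auto
      obtain n where n: "(v, n) \<in> (rstep R)\<^sup>*" "irr R n" using nf_exists[OF rs w vw(1)] by blast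
      obtain n' where n': "(v', n') \<in> (rstep R)\<^sup>*" "irr R n'" using nf_exists[OF rs w vw(2)] by blast
      have nw: "n \<in> words X" "n' \<in> words X" using rsteps_words[OF rs] n n' vw by auto
      have "val n = val v" using VR[OF n(1) vw(1)] by simp
      also have "\<dots> = val u" using VR[OF conjunct1[OF h] u] by simp
      also have "\<dots> = val v'" using VR[OF conjunct2[OF h] u] by simp
      also have "\<dots> = val n'" using VR[OF n'(1) vw(2)] by simp
      finally have "n = n'" using inj nw n n' by blast
      thus "\<exists>w. (v, w) \<in> (rstep R)\<^sup>* \<and> (v', w) \<in> (rstep R)\<^sup>*" using n n' by blast
    qed
  qed
  fix u v assume u: "u \<in> words X" and v: "v \<in> words X"
  show "val u = val v \<longleftrightarrow> (u, v) \<in> rcong R"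
  proof
    assume eq: "val u = val v"
    obtain n where n: "(u, n) \<in> (rstep R)\<^sup>*" "irr R n" using nf_exists[OF rs w u] by blast
    obtain n' where n': "(v, n') \<in> (rstep R)\<^sup>*" "irr R n'" using nf_exists[OF rs w v] by blast
    have nw: "n \<in> words X" "n' \<in> words X" using rsteps_words[OF rs] n n' u v by auto
    have "val n = val n'" using VR[OF n(1) u] VR[OF n'(1) v] eq by simp
    hence nn: "n = n'" using inj nw n n' by blast
    have s: "rstep R \<subseteq> rstep R \<union> (rstep R)\<inverse>" by blast
    have "(u, n) \<in> rcong R" unfolding rcong_def using rtrancl_mono[OF s] n(1) by blast
    moreover have "(v, n) \<in> rcong R" unfolding rcong_def using rtrancl_mono[OF s] n'(1) nn by blast
    hence "(n, v) \<in> rcong R" unfolding rcong_def by (simp add: rtrancl_converse sym_Un_converse sym_rtrancl[THEN symD])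
    ultimately show "(u, v) \<in> rcong R" unfolding rcong_def by (meson rtrancl_trans)
  next
    assume "(u, v) \<in> rcong R"
    thus "val u = val v" using val_rcong[of X R val, OF rs pres _ u] by blast
  qed
qed


lemma rcong_map:
  assumes "\<And>a b. (a, b) \<in> rstep R1 \<Longrightarrow> (F a, F b) \<in> rstep R2"
    and "(u, v) \<in> rcong R1"
  shows "(F u, F v) \<in> rcong R2"
  using assms(2) unfolding rcong_def
proof (induction rule: rtrancl_induct)
  case base thus ?case by simp
next
  case (step y y')
  hence "(F y, F y') \<in> rstep R2 \<union> (rstep R2)\<inverse>" using assms(1) by blast
  thus ?case using step.IH by (meson rtrancl.rtrancl_into_rtrancl)
qed

lemma rsteps_map:
  assumes "\<And>a b. (a, b) \<in> rstep R1 \<Longrightarrow> (F a, F b) \<in> rstep R2"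
    and "(u, v) \<in> (rstep R1)\<^sup>*"
  shows "(F u, F v) \<in> (rstep R2)\<^sup>*"
  using assms(2)
proof (induction rule: rtrancl_induct)
  case base thus ?case by simp
next
  case (step y y')
  thus ?case using assms(1) by (meson rtrancl.rtrancl_into_rtrancl)
qed

lemma transfer:
  fixes A :: "'c set" and RR :: "('c list \<times> 'c list) set"
  assumes fA: "finite A" and fR: "finite RR" and rs: "rewriting_system A RR"
    and cp: "complete_rs A RR" and db: "defined_by S f A RR"
  shows "fcrs_defined S f"
proof -
  obtain h :: "'c \<Rightarrow> nat" and n where hn: "h ` A = {i. i < n}" "inj_on h A"
    using finite_imp_inj_to_nat_seg[OF fA] by blast
  define g where "g = inv_into A h"
  define M where "M = map h"
  define N where "N = map g"
  define X' where "X' = h ` A"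
  define R' where "R' = (\<lambda>(l, r). (M l, M r)) ` RR"
  have NM: "N (M w) = w" if "set w \<subseteq> A" for w
    using that hn(2) unfolding N_def M_def g_def by (induction w) auto
  have MN: "M (N w) = w" if "set w \<subseteq> X'" for w
    using that unfolding N_def M_def g_def X'_def by (induction w) (auto simp: f_inv_into_f)
  have NA: "set (N w) \<subseteq> A" if "set w \<subseteq> X'" for w
    using that unfolding N_def g_def X'_def by (auto simp: inv_into_into)
  have Mw: "M w \<in> words X'" if "w \<in> words A" for w
    using that unfolding words_def M_def X'_def by auto
  have Nw: "N w \<in> words A" if "w \<in> words X'" for w
    using that NA unfolding words_def N_def by auto
  have RRw: "l \<in> words A" "r \<in> words A" if "(l, r) \<in> RR" for l r
    using rs that unfolding rewriting_system_def by auto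
  have fwd: "(M a, M b) \<in> rstep R'" if "(a, b) \<in> rstep RR" for a b
    using that
  proof (elim rstepE)
    fix w1 u v w2 assume "a = w1 @ u @ w2" "b = w1 @ v @ w2" "(u, v) \<in> RR"
    moreover have "(M u, M v) \<in> R'" using \<open>(u, v) \<in> RR\<close> unfolding R'_def by force
    ultimately show ?thesis using rstepI[of "M u" "M v" R' "M w1" "M w2"] unfolding M_def by simp
  qed
  have bwd: "(N a, N b) \<in> rstep RR" if "(a, b) \<in> rstep R'" for a b
    using that
  proof (elim rstepE)
    fix w1 u v w2 assume h: "a = w1 @ u @ w2" "b = w1 @ v @ w2" "(u, v) \<in> R'"
    then obtain l r where lr: "(l, r) \<in> RR" "u = M l" "v = M r" unfolding R'_def by auto
    have "N u = l" "N v = r" using lr NM RRw[OF lr(1)] unfolding words_def by auto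
    thus ?thesis using h rstepI[of l r RR "N w1" "N w2"] lr(1) unfolding N_def by simp
  qed
  have rs': "rewriting_system X' R'" unfolding rewriting_system_def R'_def
    using RRw Mw by auto
  obtain \<phi> where \<phi>: "\<phi> ` words A = S" "\<forall>u\<in>words A. \<forall>v\<in>words A. \<phi> (u @ v) = f (\<phi> u) (\<phi> v)"
    "\<forall>u\<in>words A. \<forall>v\<in>words A. \<phi> u = \<phi> v \<longleftrightarrow> (u, v) \<in> rcong RR"
    using db unfolding defined_by_def by blast
  have noe: "noetherian X' R'" unfolding noetherian_def
  proof
    assume "\<exists>c :: nat \<Rightarrow> nat list. (\<forall>i. c i \<in> words X') \<and> (\<forall>i. (c i, c (Suc i)) \<in> rstep R')"
    then obtain c :: "nat \<Rightarrow> nat list" where c: "\<forall>i. c i \<in> words X'" "\<forall>i. (c i, c (Suc i)) \<in> rstep R'" by blast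
    have "(\<forall>i. N (c i) \<in> words A) \<and> (\<forall>i. (N (c i), N (c (Suc i))) \<in> rstep RR)"
      using c Nw bwd by blast
    hence "\<exists>d :: nat \<Rightarrow> 'c list. (\<forall>i. d i \<in> words A) \<and> (\<forall>i. (d i, d (Suc i)) \<in> rstep RR)"
      by (rule exI[of _ "\<lambda>i. N (c i)"])
    thus False using cp unfolding complete_rs_def noetherian_def by blast
  qed
  have con: "confluent X' R'" unfolding confluent_def
  proof (intro ballI allI impI)
    fix u v v' assume u: "u \<in> words X'" and h: "(u, v) \<in> (rstep R')\<^sup>* \<and> (u, v') \<in> (rstep R')\<^sup>*"
    have "(N u, N v) \<in> (rstep RR)\<^sup>*" "(N u, N v') \<in> (rstep RR)\<^sup>*"
      using rsteps_map[of R' N RR, OF bwd] h by auto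
    then obtain w where w: "(N v, w) \<in> (rstep RR)\<^sup>*" "(N v', w) \<in> (rstep RR)\<^sup>*"
      using cp Nw[OF u] unfolding complete_rs_def confluent_def by blast
    have "(M (N v), M w) \<in> (rstep R')\<^sup>*" "(M (N v'), M w) \<in> (rstep R')\<^sup>*"
      using rsteps_map[of RR M R', OF fwd] w by auto
    moreover have "v \<in> words X'" "v' \<in> words X'" using rsteps_words[OF rs' _ u] h by auto
    ultimately show "\<exists>w. (v, w) \<in> (rstep R')\<^sup>* \<and> (v', w) \<in> (rstep R')\<^sup>*"
      using MN unfolding words_def by auto
  qed
  have def': "defined_by S f X' R'" unfolding defined_by_def
  proof (intro exI[of _ "\<lambda>w. \<phi> (N w)"] conjI ballI)
    show "(\<lambda>w. \<phi> (N w)) ` words X' = S"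
    proof
      show "(\<lambda>w. \<phi> (N w)) ` words X' \<subseteq> S" using Nw \<phi>(1) by blast
      show "S \<subseteq> (\<lambda>w. \<phi> (N w)) ` words X'"
      proof
        fix s assume "s \<in> S"
        then obtain w where w: "w \<in> words A" "s = \<phi> w" using \<phi>(1) by blast
        hence "N (M w) = w" using NM unfolding words_def by blast
        thus "s \<in> (\<lambda>w. \<phi> (N w)) ` words X'" using Mw[OF w(1)] w(2) by force
      qed
    qed
    fix u v assume u: "u \<in> words X'" and v: "v \<in> words X'"
    show "\<phi> (N (u @ v)) = f (\<phi> (N u)) (\<phi> (N v))" using \<phi>(2) Nw[OF u] Nw[OF v] unfolding N_def by simp
    show "\<phi> (N u) = \<phi> (N v) \<longleftrightarrow> (u, v) \<in> rcong R'"
    proof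
      assume "\<phi> (N u) = \<phi> (N v)"
      hence "(N u, N v) \<in> rcong RR" using \<phi>(3) Nw[OF u] Nw[OF v] by blast
      hence "(M (N u), M (N v)) \<in> rcong R'" using rcong_map[of RR M R', OF fwd] by blast
      thus "(u, v) \<in> rcong R'" using MN u v unfolding words_def by auto
    next
      assume "(u, v) \<in> rcong R'"
      hence "(N u, N v) \<in> rcong RR" using rcong_map[of R' N RR, OF bwd] by blast
      thus "\<phi> (N u) = \<phi> (N v)" using \<phi>(3) Nw[OF u] Nw[OF v] by blast
    qed
  qed
  have "finite X'" unfolding X'_def using fA by simp
  moreover have "finite R'" unfolding R'_def using fR by simp
  ultimately show ?thesis unfolding fcrs_defined_def complete_rs_def using rs' noe con def' by blast
qed



datatype 'a letter = Ltr 'a nat 'a | Zl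

locale cons =
  fixes S :: "'a set" and f :: "'a \<Rightarrow> 'a \<Rightarrow> 'a" (infixl "\<cdot>" 70) and z :: 'a and e :: 'a
    and H :: "'a set" and RI :: "'a set" and QL :: "'a set"
    and X :: "nat set" and R :: "(nat list \<times> nat list) set" and \<phi> :: "nat list \<Rightarrow> 'a"
  assumes sg: "semigroup_on S f"
    and zS: "z \<in> S" and zl: "x \<in> S \<Longrightarrow> z \<cdot> x = z" and zr: "x \<in> S \<Longrightarrow> x \<cdot> z = z"
    and HS: "H \<subseteq> S" and eH: "e \<in> H" and He: "g \<in> H \<Longrightarrow> e \<cdot> g = g \<and> g \<cdot> e = g"
    and Hmul: "g \<in> H \<Longrightarrow> h \<in> H \<Longrightarrow> g \<cdot> h \<in> H"
    and RIS: "RI \<subseteq> S" and eRI: "e \<in> RI" and RIe: "r \<in> RI \<Longrightarrow> r \<cdot> e = r" and fRI: "finite RI"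
    and QLS: "QL \<subseteq> S" and eQL: "e \<in> QL" and QLe: "q \<in> QL \<Longrightarrow> e \<cdot> q = q" and fQL: "finite QL"
    and decomp: "s \<in> S \<Longrightarrow> s \<noteq> z \<Longrightarrow> \<exists>r\<in>RI. \<exists>g\<in>H. \<exists>q\<in>QL. s = r \<cdot> g \<cdot> q"
    and uniq: "r \<in> RI \<Longrightarrow> g \<in> H \<Longrightarrow> q \<in> QL \<Longrightarrow> r2 \<in> RI \<Longrightarrow> g2 \<in> H \<Longrightarrow> q2 \<in> QL \<Longrightarrow>
       r \<cdot> g \<cdot> q = r2 \<cdot> g2 \<cdot> q2 \<Longrightarrow> r = r2 \<and> g = g2 \<and> q = q2"
    and nzc: "r \<in> RI \<Longrightarrow> g \<in> H \<Longrightarrow> q \<in> QL \<Longrightarrow> r \<cdot> g \<cdot> q \<noteq> z"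
    and qrH: "q \<in> QL \<Longrightarrow> r \<in> RI \<Longrightarrow> q \<cdot> r \<noteq> z \<Longrightarrow> q \<cdot> r \<in> H"
    and fX: "finite X" and fR: "finite R" and rsX: "rewriting_system X R" and cpX: "complete_rs X R"
    and phim: "\<phi> ` words X = H"
    and phhom: "\<And>u v. u \<in> words X \<Longrightarrow> v \<in> words X \<Longrightarrow> \<phi> (u @ v) = \<phi> u \<cdot> \<phi> v"
    and phker: "\<And>u v. u \<in> words X \<Longrightarrow> v \<in> words X \<Longrightarrow> \<phi> u = \<phi> v \<longleftrightarrow> (u, v) \<in> rcong R"
begin

lemma cl[simp]: "x \<in> S \<Longrightarrow> y \<in> S \<Longrightarrow> x \<cdot> y \<in> S"
  using sg unfolding semigroup_on_def by blast

lemma assoc: "x \<in> S \<Longrightarrow> y \<in> S \<Longrightarrow> w \<in> S \<Longrightarrow> x \<cdot> y \<cdot> w = x \<cdot> (y \<cdot> w)"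
  using sg unfolding semigroup_on_def by blast

lemma eS[simp]: "e \<in> S" using eH HS by blast
lemma HS'[simp]: "g \<in> H \<Longrightarrow> g \<in> S" using HS by blast
lemma RIS'[simp]: "r \<in> RI \<Longrightarrow> r \<in> S" using RIS by blast
lemma QLS'[simp]: "r \<in> QL \<Longrightarrow> r \<in> S" using QLS by blast

lemma phH: "w \<in> words X \<Longrightarrow> \<phi> w \<in> H" using phim by blast
lemma phx: "x \<in> X \<Longrightarrow> \<phi> [x] \<in> H" using phH unfolding words_def by simp

definition A :: "'a letter set" where
  "A = {Ltr r x q | r x q. r \<in> RI \<and> x \<in> X \<and> q \<in> QL} \<union> {Zl}"

fun lval :: "'a letter \<Rightarrow> 'a" where
  "lval (Ltr r x q) = r \<cdot> \<phi> [x] \<cdot> q"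
| "lval Zl = z"

fun wv :: "'a letter list \<Rightarrow> 'a" where
  "wv [] = z"
| "wv [c] = lval c"
| "wv (c # d # w) = lval c \<cdot> wv (d # w)"

fun deco :: "'a \<Rightarrow> 'a \<Rightarrow> nat list \<Rightarrow> 'a letter list" where
  "deco r q [] = []"
| "deco r q [x] = [Ltr r x q]"
| "deco r q (x # y # w) = Ltr r x e # deco e q (y # w)"

fun lx :: "'a letter \<Rightarrow> nat list" where
  "lx (Ltr r x q) = [x]"
| "lx Zl = []"

definition E :: "'a letter list \<Rightarrow> nat list" where "E w = concat (map lx w)"

fun dl :: "'a letter \<Rightarrow> nat" where
  "dl (Ltr r x q) = (if r = e then 0 else 1) + (if q = e then 0 else 1)"
| "dl Zl = 0"

definition dc :: "'a letter list \<Rightarrow> nat" where "dc w = sum_list (map dl w)"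

fun bad :: "'a letter \<Rightarrow> 'a letter \<Rightarrow> bool" where
  "bad (Ltr r1 x1 q1) (Ltr r2 x2 q2) = (q1 \<noteq> e \<or> r2 \<noteq> e)"
| "bad _ _ = False"

fun stc :: "'a letter \<Rightarrow> 'a letter \<Rightarrow> 'a letter list" where
  "stc (Ltr r1 x1 q1) (Ltr r2 x2 q2) = (if q1 \<cdot> r2 = z then [Zl]
      else deco r1 q2 (SOME w. w \<in> words X \<and> \<phi> w = \<phi> [x1] \<cdot> (q1 \<cdot> r2) \<cdot> \<phi> [x2]))"
| "stc _ _ = [Zl]"

definition LR where "LR = {(deco r q l, deco r q t) | r q l t. (l, t) \<in> R \<and> r \<in> RI \<and> q \<in> QL}"
definition ST where "ST = {([c1, c2], stc c1 c2) | c1 c2. c1 \<in> A \<and> c2 \<in> A \<and> c1 \<noteq> Zl \<and> c2 \<noteq> Zl \<and> bad c1 c2}"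
definition ZR where "ZR = {([Zl, c], [Zl]) | c. c \<in> A} \<union> {([c, Zl], [Zl]) | c. c \<in> A}"
definition RR where "RR = LR \<union> ST \<union> ZR"

lemma lval_S: "c \<in> A \<Longrightarrow> lval c \<in> S"
  unfolding A_def using phx zS by auto

lemma wv_cons: "w \<noteq> [] \<Longrightarrow> wv (c # w) = lval c \<cdot> wv w"
  by (cases w) auto

lemma wv_S: "w \<noteq> [] \<Longrightarrow> set w \<subseteq> A \<Longrightarrow> wv w \<in> S"
proof (induction w)
  case Nil thus ?case by simp
next
  case (Cons c w)
  show ?case
  proof (cases "w = []")
    case True thus ?thesis using Cons lval_S by simp
  next
    case False thus ?thesis using Cons lval_S wv_cons by simp
  qed
qed

lemma wv_app: "u \<noteq> [] \<Longrightarrow> v \<noteq> [] \<Longrightarrow> set u \<subseteq> A \<Longrightarrow> set v \<subseteq> A \<Longrightarrow> wv (u @ v) = wv u \<cdot> wv v"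
proof (induction u)
  case Nil thus ?case by simp
next
  case (Cons c u)
  show ?case
  proof (cases "u = []")
    case True thus ?thesis using Cons wv_cons by simp
  next
    case False
    have "wv ((c # u) @ v) = lval c \<cdot> wv (u @ v)" using wv_cons False by simp
    also have "\<dots> = lval c \<cdot> (wv u \<cdot> wv v)" using Cons False by simp
    also have "\<dots> = (lval c \<cdot> wv u) \<cdot> wv v"
      using assoc lval_S wv_S Cons.prems False by simp
    also have "\<dots> = wv (c # u) \<cdot> wv v" using wv_cons False by simp
    finally show ?thesis .
  qed
qed

lemma deco_nil[simp]: "deco r q w = [] \<longleftrightarrow> w = []"
  by (induction r q w rule: deco.induct) auto

lemma deco_app: "u \<noteq> [] \<Longrightarrow> v \<noteq> [] \<Longrightarrow> deco r q (u @ v) = deco r e u @ deco e q v"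
proof (induction u arbitrary: r)
  case Nil thus ?case by simp
next
  case (Cons x u)
  show ?case
  proof (cases "u = []")
    case True
    then obtain y v' where "v = y # v'" using Cons by (cases v) auto
    thus ?thesis using True by simp
  next
    case False
    then obtain y u' where u: "u = y # u'" by (cases u) auto
    have "deco r q ((x # u) @ v) = Ltr r x e # deco e q (u @ v)" using u by simp
    also have "\<dots> = Ltr r x e # deco e e u @ deco e q v" using Cons.IH[OF False Cons.prems(2)] by simp
    also have "\<dots> = deco r e (x # u) @ deco e q v" using u by simp
    finally show ?thesis .
  qed
qed

lemma E_app[simp]: "E (u @ v) = E u @ E v" unfolding E_def by simp
lemma E_Cons[simp]: "E (c # v) = lx c @ E v" unfolding E_def by simp
lemma E_Nil[simp]: "E [] = []" unfolding E_def by simp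

lemma E_deco[simp]: "E (deco r q w) = w"
  by (induction r q w rule: deco.induct) auto

lemma dc_app[simp]: "dc (u @ v) = dc u + dc v" unfolding dc_def by simp
lemma dc_Cons[simp]: "dc (c # v) = dl c + dc v" unfolding dc_def by simp
lemma dc_Nil[simp]: "dc [] = 0" unfolding dc_def by simp

lemma dc_deco: "w \<noteq> [] \<Longrightarrow> dc (deco r q w) = (if r = e then 0 else 1) + (if q = e then 0 else 1)"
  by (induction r q w rule: deco.induct) auto

lemma deco_A: "set w \<subseteq> X \<Longrightarrow> r \<in> RI \<Longrightarrow> q \<in> QL \<Longrightarrow> set (deco r q w) \<subseteq> A"
  by (induction r q w rule: deco.induct) (auto simp: A_def eRI eQL)

lemma deco_noZ: "Zl \<notin> set (deco r q w)"
  by (induction r q w rule: deco.induct) auto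

lemma deco_words: "w \<in> words X \<Longrightarrow> r \<in> RI \<Longrightarrow> q \<in> QL \<Longrightarrow> deco r q w \<in> words A"
  using deco_A unfolding words_def by auto

lemma wv_deco: "w \<in> words X \<Longrightarrow> r \<in> RI \<Longrightarrow> q \<in> QL \<Longrightarrow> wv (deco r q w) = r \<cdot> \<phi> w \<cdot> q"
proof (induction r q w rule: deco.induct)
  case (1 r q) thus ?case unfolding words_def by simp
next
  case (2 r q x) thus ?case by simp
next
  case (3 r q x y w)
  have x: "x \<in> X" and yw: "y # w \<in> words X" using 3(2) unfolding words_def by auto
  have px: "\<phi> [x] \<in> H" using phx[OF x] .
  have py: "\<phi> (y # w) \<in> H" using phH[OF yw] .
  have "wv (deco r q (x # y # w)) = lval (Ltr r x e) \<cdot> wv (deco e q (y # w))"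
    using wv_cons by simp
  also have "\<dots> = (r \<cdot> \<phi> [x] \<cdot> e) \<cdot> (e \<cdot> \<phi> (y # w) \<cdot> q)" using 3(1)[OF yw eRI 3(4)] by simp
  also have "\<dots> = r \<cdot> (\<phi> [x] \<cdot> e) \<cdot> (e \<cdot> \<phi> (y # w)) \<cdot> q"
    using px py 3(3,4) by (simp add: assoc)
  also have "\<dots> = r \<cdot> (\<phi> [x] \<cdot> \<phi> (y # w)) \<cdot> q" using He[OF px] He[OF py] px py 3(3,4) by (simp add: assoc)
  also have "\<phi> [x] \<cdot> \<phi> (y # w) = \<phi> (x # y # w)" using phhom[of "[x]" "y # w"] x yw unfolding words_def by simp
  finally show ?case .
qed


lemma finA: "finite A"
proof -
  have "{Ltr r x q | r x q. r \<in> RI \<and> x \<in> X \<and> q \<in> QL} = (\<lambda>(r, x, q). Ltr r x q) ` (RI \<times> X \<times> QL)"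
    by force
  thus ?thesis unfolding A_def using fRI fX fQL by simp
qed

lemma A_cases: "c \<in> A \<Longrightarrow> c = Zl \<or> (\<exists>r x q. c = Ltr r x q \<and> r \<in> RI \<and> x \<in> X \<and> q \<in> QL)"
  unfolding A_def by blast

lemma lval2: assumes "r1 \<in> RI" "x1 \<in> X" "q1 \<in> QL" "r2 \<in> RI" "x2 \<in> X" "q2 \<in> QL"
  shows "lval (Ltr r1 x1 q1) \<cdot> lval (Ltr r2 x2 q2) = r1 \<cdot> (\<phi> [x1] \<cdot> (q1 \<cdot> r2) \<cdot> \<phi> [x2]) \<cdot> q2"
  using assms phx by (simp add: assoc)

lemma stc_prop: assumes c1: "c1 \<in> A" "c1 \<noteq> Zl" and c2: "c2 \<in> A" "c2 \<noteq> Zl"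
  shows "stc c1 c2 \<in> words A \<and> wv (stc c1 c2) = wv [c1, c2] \<and>
    (bad c1 c2 \<longrightarrow> dc (stc c1 c2) < dc [c1, c2])"
proof -
  obtain r1 x1 q1 where 1: "c1 = Ltr r1 x1 q1" "r1 \<in> RI" "x1 \<in> X" "q1 \<in> QL" using A_cases[OF c1(1)] c1(2) by blast
  obtain r2 x2 q2 where 2: "c2 = Ltr r2 x2 q2" "r2 \<in> RI" "x2 \<in> X" "q2 \<in> QL" using A_cases[OF c2(1)] c2(2) by blast
  have p1: "\<phi> [x1] \<in> H" "\<phi> [x2] \<in> H" using phx 1 2 by auto
  have v: "wv [c1, c2] = r1 \<cdot> (\<phi> [x1] \<cdot> (q1 \<cdot> r2) \<cdot> \<phi> [x2]) \<cdot> q2" using lval2 1 2 by simp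
  show ?thesis
  proof (cases "q1 \<cdot> r2 = z")
    case True
    have "wv [c1, c2] = z" using v True p1 1 2 zl zr by simp
    moreover have "[Zl] \<in> words A" unfolding words_def A_def by simp
    ultimately show ?thesis using True 1 2 by simp
  next
    case False
    have h: "\<phi> [x1] \<cdot> (q1 \<cdot> r2) \<cdot> \<phi> [x2] \<in> H" using qrH[OF 1(4) 2(2) False] p1 Hmul by blast
    then obtain w0 where "w0 \<in> words X" "\<phi> w0 = \<phi> [x1] \<cdot> (q1 \<cdot> r2) \<cdot> \<phi> [x2]" using phim by force
    hence "\<exists>w. w \<in> words X \<and> \<phi> w = \<phi> [x1] \<cdot> (q1 \<cdot> r2) \<cdot> \<phi> [x2]" by blast
    then obtain w where w: "w \<in> words X" "\<phi> w = \<phi> [x1] \<cdot> (q1 \<cdot> r2) \<cdot> \<phi> [x2]"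
      and ws: "(SOME w. w \<in> words X \<and> \<phi> w = \<phi> [x1] \<cdot> (q1 \<cdot> r2) \<cdot> \<phi> [x2]) = w"
      by (metis (mono_tags, lifting) someI_ex)
    have st: "stc c1 c2 = deco r1 q2 w" using 1 2 False ws by simp
    have wn: "w \<noteq> []" using w unfolding words_def by simp
    have "stc c1 c2 \<in> words A" using st deco_words[OF w(1) 1(2) 2(4)] by simp
    moreover have "wv (stc c1 c2) = wv [c1, c2]" using st wv_deco[OF w(1) 1(2) 2(4)] v w(2) by simp
    moreover have "bad c1 c2 \<longrightarrow> dc (stc c1 c2) < dc [c1, c2]" using st dc_deco[OF wn] 1 2 by auto
    ultimately show ?thesis by blast
  qed
qed

lemma RR_words: "(l, t) \<in> RR \<Longrightarrow> l \<in> words A \<and> t \<in> words A"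
proof -
  assume "(l, t) \<in> RR"
  hence "(l, t) \<in> LR \<or> (l, t) \<in> ST \<or> (l, t) \<in> ZR" unfolding RR_def by blast
  thus ?thesis
  proof (elim disjE)
    assume "(l, t) \<in> LR"
    then obtain r q l0 t0 where h: "l = deco r q l0" "t = deco r q t0" "(l0, t0) \<in> R" "r \<in> RI" "q \<in> QL"
      unfolding LR_def by blast
    have "l0 \<in> words X" "t0 \<in> words X" using rsX h(3) unfolding rewriting_system_def by auto
    thus ?thesis using h deco_words by simp
  next
    assume "(l, t) \<in> ST"
    then obtain c1 c2 where h: "l = [c1, c2]" "t = stc c1 c2" "c1 \<in> A" "c2 \<in> A" "c1 \<noteq> Zl" "c2 \<noteq> Zl"
      unfolding ST_def by blast
    thus ?thesis using stc_prop[OF h(3,5,4,6)] unfolding words_def by simp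
  next
    assume "(l, t) \<in> ZR"
    thus ?thesis unfolding ZR_def words_def A_def by auto
  qed
qed

lemma rsA: "rewriting_system A RR"
  unfolding rewriting_system_def using RR_words by blast

lemma finRR: "finite RR"
proof -
  have "LR = (\<lambda>((l, t), r, q). (deco r q l, deco r q t)) ` (R \<times> RI \<times> QL)" unfolding LR_def by force
  hence f1: "finite LR" using fR fRI fQL by simp
  have "ST \<subseteq> (\<lambda>(c1, c2). ([c1, c2], stc c1 c2)) ` (A \<times> A)" unfolding ST_def by force
  hence f2: "finite ST" using finA finite_subset by blast
  have "ZR = (\<lambda>c. ([Zl, c], [Zl])) ` A \<union> (\<lambda>c. ([c, Zl], [Zl])) ` A" unfolding ZR_def by blast
  moreover have "finite ((\<lambda>c. ([Zl, c], [Zl])) ` A \<union> (\<lambda>c. ([c, Zl], [Zl])) ` A)"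
    by (intro finite_UnI finite_imageI finA)
  ultimately have f3: "finite ZR" by metis
  show ?thesis unfolding RR_def using f1 f2 f3 by simp
qed

lemma RR_val: "(l, t) \<in> RR \<Longrightarrow> wv l = wv t"
proof -
  assume "(l, t) \<in> RR"
  hence "(l, t) \<in> LR \<or> (l, t) \<in> ST \<or> (l, t) \<in> ZR" unfolding RR_def by blast
  thus ?thesis
  proof (elim disjE)
    assume "(l, t) \<in> LR"
    then obtain r q l0 t0 where h: "l = deco r q l0" "t = deco r q t0" "(l0, t0) \<in> R" "r \<in> RI" "q \<in> QL"
      unfolding LR_def by blast
    have w: "l0 \<in> words X" "t0 \<in> words X" using rsX h(3) unfolding rewriting_system_def by auto
    have "(l0, t0) \<in> rcong R" unfolding rcong_def using h(3) rstepI[of l0 t0 R "[]" "[]"] by auto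
    hence "\<phi> l0 = \<phi> t0" using phker w by blast
    thus ?thesis using h wv_deco w by simp
  next
    assume "(l, t) \<in> ST"
    then obtain c1 c2 where h: "l = [c1, c2]" "t = stc c1 c2" "c1 \<in> A" "c2 \<in> A" "c1 \<noteq> Zl" "c2 \<noteq> Zl"
      unfolding ST_def by blast
    thus ?thesis using stc_prop[OF h(3,5,4,6)] by simp
  next
    assume "(l, t) \<in> ZR"
    then obtain c where "c \<in> A" "(l = [Zl, c] \<or> l = [c, Zl]) \<and> t = [Zl]" unfolding ZR_def by blast
    thus ?thesis using lval_S zl zr by auto
  qed
qed

lemma wv_ctx: assumes "l \<noteq> []" "t \<noteq> []" "set l \<subseteq> A" "set t \<subseteq> A" "set w1 \<subseteq> A" "set w2 \<subseteq> A"
  "wv l = wv t" shows "wv (w1 @ l @ w2) = wv (w1 @ t @ w2)"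
proof -
  have a: "wv (l @ w2) = wv (t @ w2)"
  proof (cases "w2 = []")
    case False thus ?thesis using wv_app assms by simp
  qed (use assms in simp)
  show ?thesis
  proof (cases "w1 = []")
    case False thus ?thesis using wv_app[of w1 "l @ w2"] wv_app[of w1 "t @ w2"] assms a by simp
  qed (use a in simp)
qed

lemma pres: "a \<in> words A \<Longrightarrow> (a, b) \<in> rstep RR \<Longrightarrow> wv a = wv b"
proof -
  assume a: "a \<in> words A" and st: "(a, b) \<in> rstep RR"
  from st show ?thesis
  proof (elim rstepE)
    fix w1 l t w2 assume h: "a = w1 @ l @ w2" "b = w1 @ t @ w2" "(l, t) \<in> RR"
    have "l \<in> words A" "t \<in> words A" using RR_words[OF h(3)] by auto
    thus ?thesis using wv_ctx[of l t w1 w2] a h RR_val[OF h(3)] unfolding words_def by auto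
  qed
qed


subsection \<open>termination\<close>

lemma split_pre: "l @ w2 = v @ Zl # v2 \<Longrightarrow> Zl \<notin> set l \<Longrightarrow> \<exists>p. v = l @ p \<and> w2 = p @ Zl # v2"
proof (induction l arbitrary: v)
  case Nil thus ?case by simp
next
  case (Cons x l)
  show ?case
  proof (cases v)
    case Nil thus ?thesis using Cons.prems by simp
  next
    case (Cons y v')
    thus ?thesis using Cons.prems Cons.IH[of v'] by auto
  qed
qed

lemma split_Z: "w1 @ l @ w2 = v1 @ Zl # v2 \<Longrightarrow> Zl \<notin> set l \<Longrightarrow> l \<noteq> [] \<Longrightarrow>
  (\<exists>p. w1 = v1 @ Zl # p \<and> v2 = p @ l @ w2) \<or> (\<exists>p. v1 = w1 @ l @ p \<and> w2 = p @ Zl # v2)"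
proof (induction v1 arbitrary: w1)
  case Nil
  show ?case
  proof (cases w1)
    case Nil
    then obtain x l' where "l = x # l'" using Nil.prems by (cases l) auto
    thus ?thesis using Nil.prems \<open>w1 = []\<close> by auto
  next
    case (Cons c w1')
    thus ?thesis using Nil.prems by auto
  qed
next
  case (Cons a v1)
  show ?case
  proof (cases w1)
    case Nil
    hence "l @ w2 = (a # v1) @ Zl # v2" using Cons.prems by simp
    then obtain p where "a # v1 = l @ p" "w2 = p @ Zl # v2" using split_pre Cons.prems by blast
    thus ?thesis using Nil by auto
  next
    case (Cons c w1')
    hence "w1' @ l @ w2 = v1 @ Zl # v2" "c = a" using Cons.prems by auto
    from Cons.IH[OF this(1) Cons.prems(2,3)] show ?thesis using \<open>c = a\<close> \<open>w1 = c # w1'\<close> by auto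
  qed
qed

definition Rr where "Rr = {(v, u). u \<in> words A \<and> (u, v) \<in> rstep LR}"
definition Dd where "Dd = {(v, u). u \<in> words A \<and> (\<exists>w1 w2 c. v = w1 @ Zl # w2 \<and> (u = w1 @ Zl # c # w2 \<or> u = w1 @ c # Zl # w2))}"

lemma E_set: "set w \<subseteq> A \<Longrightarrow> set (E w) \<subseteq> X"
proof (induction w)
  case (Cons c w)
  thus ?case using A_cases[of c] by auto
qed simp

lemma LR_E: "(l, t) \<in> LR \<Longrightarrow> \<exists>r q l0 t0. l = deco r q l0 \<and> t = deco r q t0 \<and> (l0, t0) \<in> R \<and> r \<in> RI \<and> q \<in> QL"
  unfolding LR_def by blast

lemma wf_Rr: "wf Rr"
proof -
  have w: "wf (nrel X R)" using cpX noeth_wf unfolding complete_rs_def by blast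
  have "Rr \<subseteq> inv_image (nrel X R) E"
  proof
    fix p assume "p \<in> Rr"
    then obtain v u where p: "p = (v, u)" "u \<in> words A" "(u, v) \<in> rstep LR" unfolding Rr_def by blast
    from p(3) obtain w1 l t w2 where h: "u = w1 @ l @ w2" "v = w1 @ t @ w2" "(l, t) \<in> LR" by (elim rstepE)
    obtain r q l0 t0 where lt: "l = deco r q l0" "t = deco r q t0" "(l0, t0) \<in> R" using LR_E[OF h(3)] by blast
    have "l0 \<in> words X" using rsX lt(3) unfolding rewriting_system_def by auto
    hence "E u \<noteq> []" using h lt unfolding words_def by simp
    moreover have "set (E u) \<subseteq> X" using E_set p(2) unfolding words_def by blast
    ultimately have "E u \<in> words X" unfolding words_def by blast
    moreover have "(E u, E v) \<in> rstep R" using h lt rstepI[OF lt(3), of "E w1" "E w2"] by simp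
    ultimately show "p \<in> inv_image (nrel X R) E" using p(1) unfolding nrel_def by simp
  qed
  thus ?thesis using wf_inv_image[OF w] wf_subset by blast
qed

lemma wf_Dd: "wf Dd"
proof -
  have "Dd \<subseteq> measure length" unfolding Dd_def by auto
  thus ?thesis using wf_subset by blast
qed

lemma rsLR: "rewriting_system A LR"
  using RR_words unfolding rewriting_system_def RR_def by blast

lemma comm: "Rr O Dd \<subseteq> Dd O Rr"
proof
  fix p assume "p \<in> Rr O Dd"
  then obtain a b c where p: "p = (a, c)" "(a, b) \<in> Rr" "(b, c) \<in> Dd" by blast
  have bw: "b \<in> words A" and bst: "(b, a) \<in> rstep LR" using p(2) unfolding Rr_def by auto
  have cw: "c \<in> words A" using p(3) unfolding Dd_def by auto
  obtain v1 v2 x where d: "b = v1 @ Zl # v2" "c = v1 @ Zl # x # v2 \<or> c = v1 @ x # Zl # v2"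
    using p(3) unfolding Dd_def by blast
  from bst obtain w1 l t w2 where h: "b = w1 @ l @ w2" "a = w1 @ t @ w2" "(l, t) \<in> LR" by (elim rstepE)
  obtain r q l0 t0 where lt: "l = deco r q l0" "t = deco r q t0" "(l0, t0) \<in> R" using LR_E[OF h(3)] by blast
  have l0: "l0 \<noteq> []" using rsX lt(3) unfolding rewriting_system_def words_def by auto
  have lZ: "Zl \<notin> set l" "l \<noteq> []" using lt deco_noZ l0 by auto
  have key: "\<exists>b'. (c, b') \<in> rstep LR \<and> (\<exists>w1 w2. a = w1 @ Zl # w2 \<and> (b' = w1 @ Zl # x # w2 \<or> b' = w1 @ x # Zl # w2))"
  proof -
    from split_Z[of w1 l w2 v1 v2] h(1) d(1) lZ
    consider (A) p where "w1 = v1 @ Zl # p" "v2 = p @ l @ w2" | (B) p where "v1 = w1 @ l @ p" "w2 = p @ Zl # v2"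
      by auto
    thus ?thesis
    proof cases
      case A
      show ?thesis
      proof (cases "c = v1 @ Zl # x # v2")
        case True
        have "(c, (v1 @ Zl # x # p) @ t @ w2) \<in> rstep LR" using True A rstepI[OF h(3), of "v1 @ Zl # x # p" w2] by simp
        moreover have "a = v1 @ Zl # (p @ t @ w2)" using h(2) A by simp
        ultimately show ?thesis by force
      next
        case False
        hence c: "c = v1 @ x # Zl # v2" using d(2) by blast
        have "(c, (v1 @ x # Zl # p) @ t @ w2) \<in> rstep LR" using c A rstepI[OF h(3), of "v1 @ x # Zl # p" w2] by simp
        moreover have "a = v1 @ Zl # (p @ t @ w2)" using h(2) A by simp
        ultimately show ?thesis by force
      qed
    next
      case B
      show ?thesis
      proof (cases "c = v1 @ Zl # x # v2")
        case True
        show ?thesis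
        proof (intro exI conjI)
          show "(c, (w1 @ t @ p) @ Zl # x # v2) \<in> rstep LR" using True B rstepI[OF h(3), of w1 "p @ Zl # x # v2"] by simp
          show "a = (w1 @ t @ p) @ Zl # v2" using h(2) B by simp
          show "(w1 @ t @ p) @ Zl # x # v2 = (w1 @ t @ p) @ Zl # x # v2 \<or> (w1 @ t @ p) @ Zl # x # v2 = (w1 @ t @ p) @ x # Zl # v2" by simp
        qed
      next
        case False
        hence c: "c = v1 @ x # Zl # v2" using d(2) by blast
        show ?thesis
        proof (intro exI conjI)
          show "(c, (w1 @ t @ p) @ x # Zl # v2) \<in> rstep LR" using c B rstepI[OF h(3), of w1 "p @ x # Zl # v2"] by simp
          show "a = (w1 @ t @ p) @ Zl # v2" using h(2) B by simp
          show "(w1 @ t @ p) @ x # Zl # v2 = (w1 @ t @ p) @ Zl # x # v2 \<or> (w1 @ t @ p) @ x # Zl # v2 = (w1 @ t @ p) @ x # Zl # v2" by simp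
        qed
      qed
    qed
  qed
  then obtain b' where b': "(c, b') \<in> rstep LR" "\<exists>w1 w2. a = w1 @ Zl # w2 \<and> (b' = w1 @ Zl # x # w2 \<or> b' = w1 @ x # Zl # w2)"
    by blast
  have b'w: "b' \<in> words A" using rstep_words[OF rsLR b'(1)] cw by blast
  have "(a, b') \<in> Dd" unfolding Dd_def using b'(2) b'w by blast
  moreover have "(b', c) \<in> Rr" unfolding Rr_def using b'(1) cw by blast
  ultimately show "p \<in> Dd O Rr" using p(1) by blast
qed

lemma wf_RD: "wf (Rr \<union> Dd)"
proof -
  have q: "Rr O Dd \<subseteq> (Rr \<union> Dd)\<^sup>* O Rr" using comm by blast
  have T: "wf (Dd\<^sup>* O Rr O Dd\<^sup>*)" using qc_wf_relto_iff[OF q] wf_Rr by blast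
  have "(Dd\<^sup>* O Rr O Dd\<^sup>*) O Dd \<subseteq> Dd\<^sup>* O Rr O Dd\<^sup>*" by (auto intro: rtrancl_into_rtrancl)
  hence "wf ((Dd\<^sup>* O Rr O Dd\<^sup>*) \<union> Dd)" using wf_union_compatible[OF T wf_Dd] by blast
  moreover have "Rr \<union> Dd \<subseteq> (Dd\<^sup>* O Rr O Dd\<^sup>*) \<union> Dd"
  proof (rule subrelI)
    fix x y assume "(x, y) \<in> Rr \<union> Dd"
    thus "(x, y) \<in> (Dd\<^sup>* O Rr O Dd\<^sup>*) \<union> Dd" by (meson UnE UnI1 UnI2 relcompI rtrancl.rtrancl_refl)
  qed
  ultimately show ?thesis using wf_subset by blast
qed

lemma wf_main: "wf (nrel A RR)"
proof -
  have "nrel A RR \<subseteq> inv_image (less_than <*lex*> (Rr \<union> Dd)) (\<lambda>w. (dc w, w))"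
  proof
    fix p assume "p \<in> nrel A RR"
    then obtain v u where p: "p = (v, u)" "u \<in> words A" "(u, v) \<in> rstep RR" unfolding nrel_def by blast
    from p(3) obtain w1 l t w2 where h: "u = w1 @ l @ w2" "v = w1 @ t @ w2" "(l, t) \<in> RR" by (elim rstepE)
    have "(l, t) \<in> LR \<or> (l, t) \<in> ST \<or> (l, t) \<in> ZR" using h(3) unfolding RR_def by blast
    hence "dc t < dc l \<or> (dc t = dc l \<and> (v, u) \<in> Rr \<union> Dd)"
    proof (elim disjE)
      assume lt: "(l, t) \<in> LR"
      obtain r q l0 t0 where lt': "l = deco r q l0" "t = deco r q t0" "(l0, t0) \<in> R" using LR_E[OF lt] by blast
      have "l0 \<noteq> []" "t0 \<noteq> []" using rsX lt'(3) unfolding rewriting_system_def words_def by auto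
      hence "dc t = dc l" using lt' dc_deco by simp
      moreover have "(v, u) \<in> Rr" unfolding Rr_def using p(2) h rstepI[OF lt] by simp
      ultimately show ?thesis by blast
    next
      assume "(l, t) \<in> ST"
      then obtain c1 c2 where s: "l = [c1, c2]" "t = stc c1 c2" "c1 \<in> A" "c2 \<in> A" "c1 \<noteq> Zl" "c2 \<noteq> Zl" "bad c1 c2"
        unfolding ST_def by blast
      thus ?thesis using stc_prop[OF s(3,5,4,6)] by simp
    next
      assume "(l, t) \<in> ZR"
      then obtain c where c: "c \<in> A" "(l = [Zl, c] \<or> l = [c, Zl]) \<and> t = [Zl]" unfolding ZR_def by blast
      show ?thesis
      proof (cases "dl c = 0")
        case False thus ?thesis using c by auto
      next
        case True
        have "(v, u) \<in> Dd"
        proof (cases "l = [Zl, c]")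
          case True
          hence "u = w1 @ Zl # c # w2" "v = w1 @ Zl # w2" using h c by auto
          thus ?thesis unfolding Dd_def using p(2) by blast
        next
          case False
          hence "u = w1 @ c # Zl # w2" "v = w1 @ Zl # w2" using h c by auto
          thus ?thesis unfolding Dd_def using p(2) by blast
        qed
        thus ?thesis using True c by auto
      qed
    qed
    thus "p \<in> inv_image (less_than <*lex*> (Rr \<union> Dd)) (\<lambda>w. (dc w, w))"
      using p(1) h by auto
  qed
  moreover have "wf (inv_image (less_than <*lex*> (Rr \<union> Dd)) (\<lambda>w. (dc w, w)))"
    by (intro wf_inv_image wf_lex_prod wf_less_than wf_RD)
  ultimately show ?thesis using wf_subset by blast
qed


subsection \<open>irreducible words\<close>

lemma irr_infix: "irr RR w \<Longrightarrow> (l, t) \<in> RR \<Longrightarrow> w = p @ l @ s \<Longrightarrow> False"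
  unfolding irr_def using rstepI by blast

lemma irr_Z: assumes w: "w \<in> words A" and i: "irr RR w" and z: "Zl \<in> set w" shows "w = [Zl]"
proof -
  obtain p s where ps: "w = p @ Zl # s" using split_list[OF z] by blast
  have sA: "set w \<subseteq> A" using w unfolding words_def by blast
  have s0: "s = []"
  proof (cases s)
    case (Cons c s')
    have "c \<in> A" using sA ps Cons by auto
    hence "([Zl, c], [Zl]) \<in> RR" unfolding RR_def ZR_def by blast
    moreover have "w = p @ [Zl, c] @ s'" using ps Cons by simp
    ultimately show ?thesis using irr_infix[OF i] by blast
  qed simp
  have p0: "p = []"
  proof (cases p rule: rev_exhaust)
    case (snoc p' c)
    have "c \<in> A" using sA ps snoc by auto
    hence "([c, Zl], [Zl]) \<in> RR" unfolding RR_def ZR_def by blast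
    moreover have "w = p' @ [c, Zl] @ s" using ps snoc by simp
    ultimately show ?thesis using irr_infix[OF i] by blast
  qed simp
  show ?thesis using ps s0 p0 by simp
qed

lemma hd_deco: "deco r q (y # w) = Ltr r y (if w = [] then q else e) # deco e q w"
  by (cases w) auto

lemma shape: "w \<noteq> [] \<Longrightarrow> set w \<subseteq> A \<Longrightarrow> Zl \<notin> set w \<Longrightarrow>
  (\<forall>p c d s. w = p @ c # d # s \<longrightarrow> \<not> bad c d) \<Longrightarrow> \<exists>r\<in>RI. \<exists>q\<in>QL. w = deco r q (E w)"
proof (induction w)
  case Nil thus ?case by simp
next
  case (Cons c w)
  obtain r x q0 where c: "c = Ltr r x q0" "r \<in> RI" "x \<in> X" "q0 \<in> QL" using A_cases[of c] Cons.prems by auto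
  show ?case
  proof (cases "w = []")
    case True thus ?thesis using c by auto
  next
    case False
    have "\<forall>p c d s. w = p @ c # d # s \<longrightarrow> \<not> bad c d"
    proof (intro allI impI)
      fix p c' d s assume "w = p @ c' # d # s"
      hence "c # w = (c # p) @ c' # d # s" by simp
      thus "\<not> bad c' d" using Cons.prems(4) by blast
    qed
    then obtain r' q' where rq: "r' \<in> RI" "q' \<in> QL" "w = deco r' q' (E w)" using Cons.IH False Cons.prems by auto
    obtain y ys where Ew: "E w = y # ys" using rq(3) False by (cases "E w") auto
    obtain w' where d: "w = Ltr r' y (if ys = [] then q' else e) # w'" "w' = deco e q' ys"
      using rq(3) Ew hd_deco by metis
    have "\<not> bad c (Ltr r' y (if ys = [] then q' else e))" using Cons.prems(4) d(1) by (metis append.left_neutral)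
    hence ee: "q0 = e" "r' = e" using c(1) by auto
    have "c # w = Ltr r x e # deco e q' (y # ys)" using c(1) ee rq(3) Ew by simp
    also have "\<dots> = deco r q' (x # y # ys)" by simp
    also have "x # y # ys = E (c # w)" using c(1) Ew by simp
    finally show ?thesis using c(2) rq(2) by blast
  qed
qed

lemma deco_split: assumes "l \<noteq> []" "r \<in> RI" "q \<in> QL"
  shows "\<exists>P T r' q'. r' \<in> RI \<and> q' \<in> QL \<and> deco r q (p @ l @ s) = P @ deco r' q' l @ T"
proof -
  have one: "\<exists>T q'. q' \<in> QL \<and> deco r' q (l @ s) = deco r' q' l @ T" for r'
  proof (cases "s = []")
    case True thus ?thesis using assms by (intro exI[of _ "[]"] exI[of _ q]) simp
  next
    case False thus ?thesis using deco_app[OF assms(1) False] eQL by blast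
  qed
  show ?thesis
  proof (cases "p = []")
    case True
    obtain T q' where "q' \<in> QL" "deco r q (l @ s) = deco r q' l @ T" using one[of r] by blast
    thus ?thesis using True assms(2) by (intro exI[of _ "[]"] exI[of _ T] exI[of _ r] exI[of _ q']) auto
  next
    case False
    have "l @ s \<noteq> []" using assms by simp
    hence "deco r q (p @ l @ s) = deco r e p @ deco e q (l @ s)" using deco_app[OF False] by simp
    moreover obtain T q' where "q' \<in> QL" "deco e q (l @ s) = deco e q' l @ T" using one[of e] by blast
    ultimately show ?thesis using eRI by (intro exI[of _ "deco r e p"] exI[of _ T] exI[of _ e] exI[of _ q']) auto
  qed
qed

lemma irr_shape: assumes w: "w \<in> words A" and i: "irr RR w"
  shows "w = [Zl] \<or> (\<exists>r\<in>RI. \<exists>q\<in>QL. \<exists>u. u \<in> words X \<and> irr R u \<and> w = deco r q u)"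
proof (cases "Zl \<in> set w")
  case True thus ?thesis using irr_Z[OF w i] by blast
next
  case False
  have sA: "set w \<subseteq> A" "w \<noteq> []" using w unfolding words_def by auto
  have nb: "\<forall>p c d s. w = p @ c # d # s \<longrightarrow> \<not> bad c d"
  proof (intro allI impI notI)
    fix p c d s assume h: "w = p @ c # d # s" "bad c d"
    have "c \<in> A" "d \<in> A" "c \<noteq> Zl" "d \<noteq> Zl" using h(1) sA False by auto
    hence "([c, d], stc c d) \<in> RR" unfolding RR_def ST_def using h(2) by blast
    moreover have "w = p @ [c, d] @ s" using h(1) by simp
    ultimately show False using irr_infix[OF i] by blast
  qed
  obtain r q where rq: "r \<in> RI" "q \<in> QL" "w = deco r q (E w)" using shape[OF sA(2,1) False nb] by blast
  have "E w \<noteq> []"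
  proof
    assume h: "E w = []"
    have "w = deco r q (E w)" by (rule rq(3))
    also have "\<dots> = []" using h by simp
    finally show False using sA(2) by simp
  qed
  hence Ew: "E w \<in> words X" using E_set[OF sA(1)] unfolding words_def by blast
  have "irr R (E w)" unfolding irr_def
  proof
    assume "\<exists>v. (E w, v) \<in> rstep R"
    then obtain v where "(E w, v) \<in> rstep R" by blast
    then obtain p l t s where h: "E w = p @ l @ s" "(l, t) \<in> R" by (elim rstepE) blast
    have "l \<noteq> []" using rsX h(2) unfolding rewriting_system_def words_def by auto
    then obtain P T r' q' where d: "r' \<in> RI" "q' \<in> QL" "deco r q (p @ l @ s) = P @ deco r' q' l @ T"
      using deco_split rq by blast
    have "(deco r' q' l, deco r' q' t) \<in> RR" unfolding RR_def LR_def using h(2) d by blast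
    moreover have "w = P @ deco r' q' l @ T" using rq(3) h(1) d(3) by simp
    ultimately show False using irr_infix[OF i] by blast
  qed
  thus ?thesis using rq Ew by blast
qed

lemma inj: assumes a: "a \<in> words A" and b: "b \<in> words A" and ia: "irr RR a" and ib: "irr RR b"
  and eq: "wv a = wv b" shows "a = b"
proof -
  have v: "wv (deco r q u) \<noteq> z" if "r \<in> RI" "q \<in> QL" "u \<in> words X" for r q u
    using wv_deco[OF that(3,1,2)] nzc[OF that(1) phH[OF that(3)] that(2)] by simp
  consider "a = [Zl]" | r q u where "r \<in> RI" "q \<in> QL" "u \<in> words X" "irr R u" "a = deco r q u"
    using irr_shape[OF a ia] by blast
  thus ?thesis
  proof cases
    case 1
    consider "b = [Zl]" | r q u where "r \<in> RI" "q \<in> QL" "u \<in> words X" "b = deco r q u"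
      using irr_shape[OF b ib] by blast
    thus ?thesis
    proof cases
      case 1 thus ?thesis using \<open>a = [Zl]\<close> by simp
    next
      case 2
      have "wv b \<noteq> z" using v[OF 2(1,2,3)] 2(4) by simp
      moreover have "wv a = z" using \<open>a = [Zl]\<close> by simp
      ultimately show ?thesis using eq by simp
    qed
  next
    case 2
    note A2 = 2
    consider "b = [Zl]" | r2 q2 u2 where "r2 \<in> RI" "q2 \<in> QL" "u2 \<in> words X" "irr R u2" "b = deco r2 q2 u2"
      using irr_shape[OF b ib] by blast
    thus ?thesis
    proof cases
      case 1
      have "wv a \<noteq> z" using v[OF A2(1,2,3)] A2(5) by simp
      moreover have "wv b = z" using 1 by simp
      ultimately show ?thesis using eq by simp
    next
      case 2
      have "r \<cdot> \<phi> u \<cdot> q = r2 \<cdot> \<phi> u2 \<cdot> q2" using eq A2 2 wv_deco by simp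
      hence rr: "r = r2 \<and> \<phi> u = \<phi> u2 \<and> q = q2" using uniq A2 2 phH by blast
      hence "(u, u2) \<in> rcong R" using phker A2(3) 2(3) by blast
      then obtain w where w: "(u, w) \<in> (rstep R)\<^sup>*" "(u2, w) \<in> (rstep R)\<^sup>*"
        using CR[OF rsX _ A2(3)] cpX unfolding complete_rs_def by blast
      have "u = u2" using irr_rsteps[OF A2(4) w(1)] irr_rsteps[OF 2(4) w(2)] by simp
      thus ?thesis using rr A2(5) 2(5) by simp
    qed
  qed
qed

lemma surj: "wv ` words A = S"
proof
  show "wv ` words A \<subseteq> S" using wv_S unfolding words_def by blast
  show "S \<subseteq> wv ` words A"
  proof
    fix s assume s: "s \<in> S"
    show "s \<in> wv ` words A"
    proof (cases "s = z")
      case True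
      have "[Zl] \<in> words A" unfolding words_def A_def by simp
      moreover have "wv [Zl] = z" by simp
      ultimately show ?thesis using True by force
    next
      case False
      obtain r g q where d: "r \<in> RI" "g \<in> H" "q \<in> QL" "s = r \<cdot> g \<cdot> q" using decomp[OF s False] by blast
      obtain u where u: "u \<in> words X" "g = \<phi> u" using phim d(2) by force
      have "wv (deco r q u) = s" using wv_deco[OF u(1) d(1) d(3)] u(2) d(4) by simp
      thus ?thesis using deco_words[OF u(1) d(1) d(3)] by force
    qed
  qed
qed

theorem main: "fcrs_defined S f"
proof -
  have c: "complete_rs A RR" and k: "\<And>u v. u \<in> words A \<Longrightarrow> v \<in> words A \<Longrightarrow> wv u = wv v \<longleftrightarrow> (u, v) \<in> rcong RR"
    using complete_from_nf[of A RR wv, OF rsA wf_main pres inj] by blast+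
  have "defined_by S f A RR" unfolding defined_by_def
  proof (intro exI[of _ wv] conjI ballI)
    show "wv ` words A = S" by (rule surj)
    fix u v assume u: "u \<in> words A" and v: "v \<in> words A"
    show "wv (u @ v) = wv u \<cdot> wv v" using wv_app u v unfolding words_def by blast
    show "wv u = wv v \<longleftrightarrow> (u, v) \<in> rcong RR" using k u v by blast
  qed
  thus ?thesis using transfer[OF finA finRR rsA c] by blast
qed

end


theorem theorem1p3:
  fixes S :: "'a set" and f :: "'a \<Rightarrow> 'a \<Rightarrow> 'a"
  assumes "completely_zero_simple S f"
    and "finite {L. left_ideal S f L}"
    and "finite {R. right_ideal S f R}"
    and "\<forall>H. maximal_subgroup S f H \<longrightarrow> fcrs_defined H f"
  shows "fcrs_defined S f"
proof -
  obtain z where z: "czs S f z" "czs S (\<lambda>x y. f y x) z" using czs_flip[OF assms(1)] by blast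
  interpret C2: czs2 S f z using z by (simp add: czs2_def)
  obtain e where e: "e \<in> S" "e \<noteq> z" "f e e = e" using C2.idem_ex by blast
  interpret C3: czs3 S f z e by (unfold_locales) (use e in auto)
  have "fcrs_defined C3.H f" using assms(4) C3.H_max by blast
  then obtain X :: "nat set" and R where XR: "finite X" "finite R" "rewriting_system X R" "complete_rs X R"
    "defined_by C3.H f X R" unfolding fcrs_defined_def by blast
  then obtain \<phi> where ph: "\<phi> ` words X = C3.H" "\<forall>u\<in>words X. \<forall>v\<in>words X. \<phi> (u @ v) = f (\<phi> u) (\<phi> v)"
    "\<forall>u\<in>words X. \<forall>v\<in>words X. \<phi> u = \<phi> v \<longleftrightarrow> (u, v) \<in> rcong R"
    unfolding defined_by_def by blast
  interpret K: cons S f z e C3.H C3.RI C3.QL X R \<phi>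
  proof (unfold_locales)
    show "semigroup_on S f" by (rule C2.L.sg)
    show "z \<in> S" by simp
    show "\<And>x. x \<in> S \<Longrightarrow> f z x = z" by simp
    show "\<And>x. x \<in> S \<Longrightarrow> f x z = z" by simp
    show "C3.H \<subseteq> S" unfolding C3.H_def by blast
    show "e \<in> C3.H" by (rule C3.e_H)
    show "\<And>g. g \<in> C3.H \<Longrightarrow> f e g = g \<and> f g e = g" using C3.HI by blast
    show "\<And>g h. g \<in> C3.H \<Longrightarrow> h \<in> C3.H \<Longrightarrow> f g h \<in> C3.H" using C3.hmul by blast
    show "C3.RI \<subseteq> S" using C3.RI_prop by blast
    show "e \<in> C3.RI" by (rule C3.e_RI)
    show "\<And>r. r \<in> C3.RI \<Longrightarrow> f r e = r" using C3.RI_prop by blast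
    show "finite C3.RI" using C3.fin_RI assms(3) by blast
    show "C3.QL \<subseteq> S" using C3.QL_prop by blast
    show "e \<in> C3.QL" by (rule C3.e_QL)
    show "\<And>q. q \<in> C3.QL \<Longrightarrow> f e q = q" using C3.QL_prop by blast
    show "finite C3.QL" using C3.fin_QL assms(2) by blast
    show "\<And>s. s \<in> S \<Longrightarrow> s \<noteq> z \<Longrightarrow> \<exists>r\<in>C3.RI. \<exists>g\<in>C3.H. \<exists>q\<in>C3.QL. s = f (f r g) q"
      using C3.decomp by blast
    show "\<And>r g q r2 g2 q2. r \<in> C3.RI \<Longrightarrow> g \<in> C3.H \<Longrightarrow> q \<in> C3.QL \<Longrightarrow> r2 \<in> C3.RI \<Longrightarrow>
      g2 \<in> C3.H \<Longrightarrow> q2 \<in> C3.QL \<Longrightarrow> f (f r g) q = f (f r2 g2) q2 \<Longrightarrow> r = r2 \<and> g = g2 \<and> q = q2"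
      using C3.uniq by blast
    show "\<And>r g q. r \<in> C3.RI \<Longrightarrow> g \<in> C3.H \<Longrightarrow> q \<in> C3.QL \<Longrightarrow> f (f r g) q \<noteq> z"
      using C3.nzc by blast
    show "\<And>q r. q \<in> C3.QL \<Longrightarrow> r \<in> C3.RI \<Longrightarrow> f q r \<noteq> z \<Longrightarrow> f q r \<in> C3.H"
      using C3.qr_H by blast
    show "finite X" "finite R" "rewriting_system X R" "complete_rs X R" using XR by auto
    show "\<phi> ` words X = C3.H" by (rule ph(1))
    show "\<And>u v. u \<in> words X \<Longrightarrow> v \<in> words X \<Longrightarrow> \<phi> (u @ v) = f (\<phi> u) (\<phi> v)" using ph(2) by blast
    show "\<And>u v. u \<in> words X \<Longrightarrow> v \<in> words X \<Longrightarrow> \<phi> u = \<phi> v \<longleftrightarrow> (u, v) \<in> rcong R" using ph(3) by blast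
  qed
  show ?thesis by (rule K.main)
qed

end
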